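(* Let $\Psi\subset\hat G$, let $R_\Psi$ be the associated character group ring, and let $x\in R_\Psi$ be a non-zerodivisor. Then $\#R_\Psi/(x)=\#\mathcal{O}/\big(\prod_{\psi\in\Psi}\psi(x)\big)$.
   Context: $G$ is a finite abelian group, $p$ an odd prime, $\mathcal{O}$ a finite extension of $\mathbf{Z}_p$ containing all values of all characters $G\to\overline{\mathbf{Q}}_p^*$, and $\hat G$ the set of these characters. For $\Psi\subset\hat G$, the character group ring $R_\Psi$ is the image of $\mathcal{O}[G]\to\prod_{\psi\in\Psi}\mathcal{O}$, $x\mapsto(\psi(x))_{\psi}$, and $\psi(x)$ for $x\in R_\Psi$ denotes the $\psi$-coordinate. *)

theory Defs
  imports "HOL-Algebra.Ring_Divisibility" "HOL-Algebra.QuotRing" "HOL-Algebra.Multiplicative_Group" "HOL-Computational_Algebra.Primes"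
begin

definition Zp :: "int \<Rightarrow> (nat \<Rightarrow> int) ring" where
  "Zp p = \<lparr> carrier = {f. (\<forall>n. 0 \<le> f n \<and> f n < p ^ n) \<and> (\<forall>n. f (Suc n) mod p ^ n = f n)},
            mult = (\<lambda>f g n. (f n * g n) mod p ^ n),
            one = (\<lambda>n. 1 mod p ^ n),
            zero = (\<lambda>n. 0),
            add = (\<lambda>f g n. (f n + g n) mod p ^ n) \<rparr>"

text \<open>O is a finite extension of Z_p: a principal ideal domain (so a DVR, the ring
  of integers of a finite extension of Q_p) together with an injective ring homomorphism
  iota : Z_p -> Ok making Ok a finitely generated Z_p-module.\<close>

definition finite_ext_Zp :: "int \<Rightarrow> ('a, 'b) ring_scheme \<Rightarrow> ((nat \<Rightarrow> int) \<Rightarrow> 'a) \<Rightarrow> bool" where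
  "finite_ext_Zp p Ok iota \<longleftrightarrow>
     principal_domain Ok \<and>
     iota \<in> ring_hom (Zp p) Ok \<and> inj_on iota (carrier (Zp p)) \<and>
     (\<exists>B. finite B \<and> B \<subseteq> carrier Ok \<and>
        (\<forall>a \<in> carrier Ok. \<exists>c. c \<in> (B \<rightarrow> carrier (Zp p)) \<and>
            a = (\<Oplus>\<^bsub>Ok\<^esub> b\<in>B. iota (c b) \<otimes>\<^bsub>Ok\<^esub> b)))"

text \<open>Since O contains all character values, the characters of G with values in
  an algebraic closure of Q_p are exactly the group homomorphisms G -> Ok^*.\<close>

definition characters :: "('g, 'c) monoid_scheme \<Rightarrow> ('a, 'b) ring_scheme \<Rightarrow> ('g \<Rightarrow> 'a) set" where
  "characters G Ok = {\<chi>. \<chi> \<in> hom G (units_of Ok) \<and> \<chi> \<in> extensional (carrier G)}"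

text \<open>O contains all values of all characters of G: for every g in G it contains a
  primitive ord(g)-th root of unity.\<close>

definition contains_char_values :: "('g, 'c) monoid_scheme \<Rightarrow> ('a, 'b) ring_scheme \<Rightarrow> bool" where
  "contains_char_values G Ok \<longleftrightarrow>
     (\<forall>g \<in> carrier G. \<exists>\<zeta> \<in> carrier Ok. \<zeta> [^]\<^bsub>Ok\<^esub> group.ord G g = \<one>\<^bsub>Ok\<^esub> \<and>
         (\<forall>k. 0 < k \<and> k < group.ord G g \<longrightarrow> \<zeta> [^]\<^bsub>Ok\<^esub> k \<noteq> \<one>\<^bsub>Ok\<^esub>))"

text \<open>psi(x) for x in O[G] (x a function carrier G -> O).\<close>

definition char_eval :: "('g, 'c) monoid_scheme \<Rightarrow> ('a, 'b) ring_scheme \<Rightarrow> ('g \<Rightarrow> 'a) \<Rightarrow> ('g \<Rightarrow> 'a) \<Rightarrow> 'a" where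
  "char_eval G Ok \<psi> a = (\<Oplus>\<^bsub>Ok\<^esub> g\<in>carrier G. a g \<otimes>\<^bsub>Ok\<^esub> \<psi> g)"

text \<open>R_Psi: image of O[G] in prod_{psi in Psi} O, elements are functions Psi -> O
  (extensional on Psi); ring operations are componentwise.\<close>

definition char_group_ring :: "('g, 'c) monoid_scheme \<Rightarrow> ('a, 'b) ring_scheme \<Rightarrow> ('g \<Rightarrow> 'a) set \<Rightarrow> (('g \<Rightarrow> 'a) \<Rightarrow> 'a) set" where
  "char_group_ring G Ok \<Psi> =
     {(\<lambda>\<psi>\<in>\<Psi>. char_eval G Ok \<psi> a) | a. a \<in> (carrier G \<rightarrow> carrier Ok)}"

definition cw_mult :: "('a, 'b) ring_scheme \<Rightarrow> 'i set \<Rightarrow> ('i \<Rightarrow> 'a) \<Rightarrow> ('i \<Rightarrow> 'a) \<Rightarrow> ('i \<Rightarrow> 'a)" where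
  "cw_mult Ok I x y = (\<lambda>i\<in>I. x i \<otimes>\<^bsub>Ok\<^esub> y i)"

definition cw_add :: "('a, 'b) ring_scheme \<Rightarrow> 'i set \<Rightarrow> ('i \<Rightarrow> 'a) \<Rightarrow> ('i \<Rightarrow> 'a) \<Rightarrow> ('i \<Rightarrow> 'a)" where
  "cw_add Ok I x y = (\<lambda>i\<in>I. x i \<oplus>\<^bsub>Ok\<^esub> y i)"

definition cw_zero :: "('a, 'b) ring_scheme \<Rightarrow> 'i set \<Rightarrow> ('i \<Rightarrow> 'a)" where
  "cw_zero Ok I = (\<lambda>i\<in>I. \<zero>\<^bsub>Ok\<^esub>)"

definition non_zerodivisor :: "('a, 'b) ring_scheme \<Rightarrow> 'i set \<Rightarrow> ('i \<Rightarrow> 'a) set \<Rightarrow> ('i \<Rightarrow> 'a) \<Rightarrow> bool" where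
  "non_zerodivisor Ok I R x \<longleftrightarrow>
     x \<in> R \<and> (\<forall>y \<in> R. cw_mult Ok I x y = cw_zero Ok I \<longrightarrow> y = cw_zero Ok I)"

definition quot_principal :: "('a, 'b) ring_scheme \<Rightarrow> 'i set \<Rightarrow> ('i \<Rightarrow> 'a) set \<Rightarrow> ('i \<Rightarrow> 'a) \<Rightarrow> ('i \<Rightarrow> 'a) set set" where
  "quot_principal Ok I R x = (\<lambda>y. {cw_add Ok I y (cw_mult Ok I x w) | w. w \<in> R}) ` R"

end

theory Submission
  imports Defs "HOL-Algebra.Polynomial_Divisibility"
begin

definition cosets_in :: "('a,'b) monoid_scheme \<Rightarrow> 'a set \<Rightarrow> 'a set \<Rightarrow> 'a set set" where
  "cosets_in G H S = (\<lambda>a. H #>\<^bsub>G\<^esub> a) ` S"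

lemma image_coarser:
  assumes "\<And>y y'. y \<in> S \<Longrightarrow> y' \<in> S \<Longrightarrow> C y = C y' \<Longrightarrow> F y = F y'"
  shows "F ` S = (\<lambda>c. F (SOME y. y \<in> S \<and> C y = c)) ` (C ` S)"
proof -
  have pw: "F (SOME z. z \<in> S \<and> C z = C y) = F y" if "y \<in> S" for y
  proof -
    have "\<exists>z. z \<in> S \<and> C z = C y" using that by blast
    then have "(SOME z. z \<in> S \<and> C z = C y) \<in> S \<and> C (SOME z. z \<in> S \<and> C z = C y) = C y"
      by (rule someI_ex)
    then show ?thesis using assms that by blast
  qed
  have "(\<lambda>c. F (SOME y. y \<in> S \<and> C y = c)) ` (C ` S) = (\<lambda>y. F (SOME z. z \<in> S \<and> C z = C y)) ` S"
    by (simp only: image_image)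
  also have "\<dots> = F ` S" by (rule image_cong) (simp_all add: pw)
  finally show ?thesis by (rule sym)
qed

lemma finite_image_coarser:
  assumes "\<And>y y'. y \<in> S \<Longrightarrow> y' \<in> S \<Longrightarrow> C y = C y' \<Longrightarrow> F y = F y'"
    and "finite (C ` S)"
  shows "finite (F ` S)"
proof -
  have "F ` S = (\<lambda>c. F (SOME y. y \<in> S \<and> C y = c)) ` (C ` S)"
    by (rule image_coarser) (rule assms(1))
  then show ?thesis using finite_imageI[OF assms(2)] by simp
qed

lemma card_image_iff:
  assumes "\<And>y y'. y \<in> S \<Longrightarrow> y' \<in> S \<Longrightarrow> C y = C y' \<longleftrightarrow> F y = F y'"
  shows "card (C ` S) = card (F ` S)"
proof -
  have 1: "C ` S = (\<lambda>c. C (SOME y. y \<in> S \<and> F y = c)) ` (F ` S)"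
    by (rule image_coarser) (use assms in blast)
  have 2: "F ` S = (\<lambda>c. F (SOME y. y \<in> S \<and> C y = c)) ` (C ` S)"
    by (rule image_coarser) (use assms in blast)
  show ?thesis
  proof (cases "finite (F ` S)")
    case True
    then have f: "finite (C ` S)" by (subst 1) (rule finite_imageI[OF True])
    have "card (C ` S) \<le> card (F ` S)" by (subst 1) (rule card_image_le[OF True])
    moreover have "card (F ` S) \<le> card (C ` S)" by (subst 2) (rule card_image_le[OF f])
    ultimately show ?thesis by simp
  next
    case False
    have "infinite (C ` S)"
    proof
      assume f: "finite (C ` S)"
      have "finite (F ` S)" by (subst 2) (rule finite_imageI[OF f])
      then show False using False by simp
    qed
    then show ?thesis using False by simp
  qed
qed

context group begin

lemma rcos_eq_iff:
  assumes "subgroup H G" "a \<in> carrier G" "b \<in> carrier G"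
  shows "(H #> a = H #> b) \<longleftrightarrow> a \<otimes> inv b \<in> H"
proof
  assume e: "H #> a = H #> b"
  have "a \<in> H #> a" by (rule rcos_self[OF assms(2,1)])
  then have "a \<in> H #> b" by (simp only: e)
  then show "a \<otimes> inv b \<in> H" by (rule subgroup.rcos_module_imp[OF assms(1) is_group assms(3)])
next
  assume "a \<otimes> inv b \<in> H"
  then have "a \<in> H #> b" by (rule subgroup.rcos_module_rev[OF assms(1) is_group assms(3) assms(2)])
  then show "H #> a = H #> b" by (rule sym[OF repr_independence[OF _ assms(3) assms(1)]])
qed

lemma cosets_tower:
  assumes H: "subgroup H G" and K: "subgroup K G" and S: "subgroup S G"
    and HK: "H \<subseteq> K" and KS: "K \<subseteq> S"
  shows "card (cosets_in G H S) = card (cosets_in G K S) * card (cosets_in G H K)"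
proof -
  have Sc: "S \<subseteq> carrier G" using S subgroup.subset by blast
  have Kc: "K \<subseteq> carrier G" using K subgroup.subset by blast
  have Hc: "H \<subseteq> carrier G" using H subgroup.subset by blast
  have HtoK: "K #> a = K #> b" if "a \<in> carrier G" "b \<in> carrier G" "H #> a = H #> b" for a b
  proof -
    have "a \<otimes> inv b \<in> H" using rcos_eq_iff[OF H that(1,2)] that(3) by simp
    then have "a \<otimes> inv b \<in> K" using HK by blast
    then show ?thesis using rcos_eq_iff[OF K that(1,2)] by simp
  qed
  show ?thesis
  proof (cases "finite (cosets_in G K S)")
    case False
    have "infinite (cosets_in G H S)"
    proof
      assume "finite (cosets_in G H S)"
      then have "finite ((\<lambda>a. K #> a) ` S)" unfolding cosets_in_def
        by (rule finite_image_coarser[rotated]) (use HtoK Sc in blast)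
      then show False using False unfolding cosets_in_def by simp
    qed
    then show ?thesis using False by simp
  next
    case finT: True
    show ?thesis
    proof (cases "finite (cosets_in G H K)")
      case False
      have "cosets_in G H K \<subseteq> cosets_in G H S" unfolding cosets_in_def using KS by blast
      then have "infinite (cosets_in G H S)" using False finite_subset by blast
      then show ?thesis using False by simp
    next
      case finHK: True
      define XX where "XX = (\<lambda>C. (\<lambda>a. H #> a) ` C)"
      have U: "cosets_in G H S = (\<Union>C\<in>cosets_in G K S. XX C)"
      proof
        show "cosets_in G H S \<subseteq> (\<Union>C\<in>cosets_in G K S. XX C)"
          unfolding cosets_in_def XX_def
        proof
          fix D assume "D \<in> (\<lambda>a. H #> a) ` S"
          then obtain a where a: "a \<in> S" "D = H #> a" by blast
          have aK: "a \<in> K #> a" using rcos_self[OF subsetD[OF Sc a(1)] K] .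
          show "D \<in> (\<Union>C\<in>(\<lambda>a. K #> a) ` S. (\<lambda>a. H #> a) ` C)"
          proof (rule UN_I)
            show "K #> a \<in> (\<lambda>a. K #> a) ` S" using a(1) by (rule imageI)
            show "D \<in> (\<lambda>a. H #> a) ` (K #> a)" using aK a(2) by (rule rev_image_eqI)
          qed
        qed
      next
        show "(\<Union>C\<in>cosets_in G K S. XX C) \<subseteq> cosets_in G H S"
          unfolding cosets_in_def XX_def
        proof
          fix D assume "D \<in> (\<Union>C\<in>(\<lambda>a. K #> a) ` S. (\<lambda>a. H #> a) ` C)"
          then obtain b a where b: "b \<in> S" and a: "a \<in> K #> b" and D: "D = H #> a" by blast
          obtain k where k: "k \<in> K" "a = k \<otimes> b" using a unfolding r_coset_def by blast
          have "k \<in> S" using k KS by blast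
          then have "a \<in> S" using k(2) subgroup.m_closed[OF S _ b] by simp
          then show "D \<in> (\<lambda>a. H #> a) ` S" using D by blast
        qed
      qed
      have cardX: "card (XX C) = card (cosets_in G H K)" if CT: "C \<in> cosets_in G K S" for C
      proof -
        obtain b where b: "b \<in> S" "C = K #> b" using CT unfolding cosets_in_def by blast
        have bc: "b \<in> carrier G" using b Sc by blast
        have "K #> b = (\<lambda>k. k \<otimes> b) ` K" by (auto simp: r_coset_def)
        then have "XX C = (\<lambda>k. H #> (k \<otimes> b)) ` K" unfolding XX_def b by (simp add: image_image)
        also have "card \<dots> = card ((\<lambda>k. H #> k) ` K)"
        proof (rule card_image_iff)
          fix k k' assume kk: "k \<in> K" "k' \<in> K"
          then have kc: "k \<in> carrier G" "k' \<in> carrier G" using Kc by auto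
          have "(k \<otimes> b) \<otimes> inv (k' \<otimes> b) = k \<otimes> inv k'"
          proof -
            have e: "b \<otimes> (inv b \<otimes> inv k') = inv k'" using kc bc by (simp add: m_assoc[symmetric])
            show ?thesis using kc bc by (simp add: inv_mult_group m_assoc e)
          qed
          then show "(H #> (k \<otimes> b) = H #> (k' \<otimes> b)) \<longleftrightarrow> (H #> k = H #> k')"
            using rcos_eq_iff[OF H] kc bc by simp
        qed
        finally show ?thesis unfolding cosets_in_def .
      qed
      have finX: "finite (XX C)" if CT: "C \<in> cosets_in G K S" for C
      proof -
        obtain b where b: "b \<in> S" "C = K #> b" using CT unfolding cosets_in_def by blast
        have "XX C \<subseteq> cosets_in G H S" using U CT by blast
        show ?thesis
        proof (rule ccontr)
          assume "infinite (XX C)"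
          then have "card (XX C) = 0" by simp
          then have "card (cosets_in G H K) = 0" using cardX[OF CT] by simp
          moreover have "cosets_in G H K \<noteq> {}" unfolding cosets_in_def
            using subgroup.one_closed[OF K] by blast
          ultimately show False using finHK by simp
        qed
      qed
      have disj: "XX C \<inter> XX C' = {}" if CT: "C \<in> cosets_in G K S" "C' \<in> cosets_in G K S" "C \<noteq> C'" for C C'
      proof (rule ccontr)
        assume "XX C \<inter> XX C' \<noteq> {}"
        then obtain a a' where a: "a \<in> C" "a' \<in> C'" "H #> a = H #> a'" unfolding XX_def by blast
        obtain b where b: "b \<in> S" "C = K #> b" using CT unfolding cosets_in_def by blast
        obtain b' where b': "b' \<in> S" "C' = K #> b'" using CT unfolding cosets_in_def by blast
        have bc: "b \<in> carrier G" "b' \<in> carrier G" using b(1) b'(1) Sc by auto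
        have "C \<subseteq> carrier G" "C' \<subseteq> carrier G" using b(2) b'(2) r_coset_subset_G[OF Kc] bc by auto
        then have ac: "a \<in> carrier G" "a' \<in> carrier G" using a by auto
        have "K #> b = K #> a" by (rule repr_independence) (use a(1) b bc K in auto)
        then have "C = K #> a" using b(2) by simp
        moreover have "K #> b' = K #> a'" by (rule repr_independence) (use a(2) b' bc K in auto)
        then have "C' = K #> a'" using b'(2) by simp
        ultimately have "C = C'" using HtoK a ac by metis
        then show False using CT by simp
      qed
      have "card (cosets_in G H S) = (\<Sum>C\<in>cosets_in G K S. card (XX C))"
        unfolding U by (rule card_UN_disjoint[OF finT]) (use finX disj in auto)
      also have "\<dots> = card (cosets_in G K S) * card (cosets_in G H K)" using cardX by simp
      finally show ?thesis .
    qed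
  qed
qed

lemma cosets_inj_hom:
  assumes f: "f \<in> hom G G" and inj: "inj_on f (carrier G)"
    and H: "subgroup H G" and K: "subgroup K G" and HK: "H \<subseteq> K"
  shows "card (cosets_in G (f ` H) (f ` K)) = card (cosets_in G H K)"
proof -
  have gh: "group_hom G G f" unfolding group_hom_def group_hom_axioms_def using f is_group by simp
  have fH: "subgroup (f ` H) G" using group_hom.subgroup_img_is_subgroup[OF gh H] .
  have Kc: "K \<subseteq> carrier G" using K subgroup.subset by blast
  have Hc: "H \<subseteq> carrier G" using H subgroup.subset by blast
  have "cosets_in G (f ` H) (f ` K) = (\<lambda>k. f ` H #> f k) ` K" unfolding cosets_in_def by (simp add: image_image)
  also have "card \<dots> = card ((\<lambda>k. H #> k) ` K)"
  proof (rule card_image_iff)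
    fix k k' assume kk: "k \<in> K" "k' \<in> K"
    then have kc: "k \<in> carrier G" "k' \<in> carrier G" using Kc by auto
    have e: "f k \<otimes> inv f k' = f (k \<otimes> inv k')"
      using kc hom_mult[OF f] group_hom.hom_inv[OF gh] by simp
    have kk': "k \<otimes> inv k' \<in> carrier G" using kc by simp
    have "f (k \<otimes> inv k') \<in> f ` H \<longleftrightarrow> k \<otimes> inv k' \<in> H"
      using inj_on_image_mem_iff[OF inj kk' Hc] .
    moreover have "(f ` H #> f k = f ` H #> f k') \<longleftrightarrow> f k \<otimes> inv f k' \<in> f ` H"
      by (rule rcos_eq_iff[OF fH hom_in_carrier[OF f kc(1)] hom_in_carrier[OF f kc(2)]])
    ultimately show "(f ` H #> f k = f ` H #> f k') \<longleftrightarrow> (H #> k = H #> k')"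
      using rcos_eq_iff[OF H kc] e by simp
  qed
  finally show ?thesis unfolding cosets_in_def .
qed

end

lemma (in group) rcos_eq_iff2:
  assumes "subgroup H G" "a \<in> carrier G" "b \<in> carrier G"
  shows "(H #> a = H #> b) \<longleftrightarrow> (\<exists>h\<in>H. a = h \<otimes> b)"
proof -
  have Hc: "H \<subseteq> carrier G" using assms(1) subgroup.subset by blast
  have "(a \<otimes> inv b \<in> H) \<longleftrightarrow> (\<exists>h\<in>H. a = h \<otimes> b)"
  proof
    assume "a \<otimes> inv b \<in> H"
    moreover have "a = (a \<otimes> inv b) \<otimes> b" using assms(2,3) by (simp add: m_assoc)
    ultimately show "\<exists>h\<in>H. a = h \<otimes> b" by blast
  next
    assume "\<exists>h\<in>H. a = h \<otimes> b"
    then obtain h where h: "h \<in> H" "a = h \<otimes> b" by blast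
    have hc: "h \<in> carrier G" using h Hc by blast
    have "a \<otimes> inv b = h" using h(2) hc assms(3) by (simp add: m_assoc)
    then show "a \<otimes> inv b \<in> H" using h by simp
  qed
  then show ?thesis using rcos_eq_iff[OF assms] by simp
qed

context domain begin

definition Oquot :: "'a \<Rightarrow> 'a set set" where
  "Oquot a = carrier (R Quot (PIdl a))"

lemma Oquot_eq: "Oquot a = cosets_in (add_monoid R) (PIdl a) (carrier R)"
  unfolding Oquot_def FactRing_def A_RCOSETS_def RCOSETS_def cosets_in_def by auto

lemma PIdl_subgroup: "a \<in> carrier R \<Longrightarrow> subgroup (PIdl a) (add_monoid R)"
  using additive_subgroup.a_subgroup[OF ideal.axioms(1)[OF cgenideal_ideal]] by blast

lemma carrier_subgroup: "subgroup (carrier R) (add_monoid R)"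
  using group.subgroup_self[OF a_group] by simp

lemma a_rcos_eq_iff:
  assumes "J \<subseteq> carrier R" "subgroup J (add_monoid R)" "a \<in> carrier R" "b \<in> carrier R"
  shows "(J +> a = J +> b) \<longleftrightarrow> (\<exists>h\<in>J. a = h \<oplus> b)"
  using group.rcos_eq_iff2[OF a_group assms(2), of a b] assms unfolding a_r_coset_def by simp

lemma mult_hom: "c \<in> carrier R \<Longrightarrow> (\<lambda>w. c \<otimes> w) \<in> hom (add_monoid R) (add_monoid R)"
  unfolding hom_def by (auto simp: r_distr)

lemma mult_inj: "c \<in> carrier R \<Longrightarrow> c \<noteq> \<zero> \<Longrightarrow> inj_on (\<lambda>w. c \<otimes> w) (carrier R)"
  unfolding inj_on_def using m_lcancel by auto

lemma mult_img_carrier: "c \<in> carrier R \<Longrightarrow> (\<lambda>w. c \<otimes> w) ` carrier R = PIdl c"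
  unfolding cgenideal_def using m_comm by auto

lemma mult_img_PIdl: "c \<in> carrier R \<Longrightarrow> b \<in> carrier R \<Longrightarrow> (\<lambda>w. c \<otimes> w) ` (PIdl b) = PIdl (c \<otimes> b)"
proof -
  assume c: "c \<in> carrier R" and b: "b \<in> carrier R"
  have "(\<lambda>w. c \<otimes> w) ` (PIdl b) = (\<lambda>x. c \<otimes> (x \<otimes> b)) ` carrier R"
    unfolding cgenideal_def by auto
  also have "\<dots> = (\<lambda>x. x \<otimes> (c \<otimes> b)) ` carrier R"
    by (rule image_cong) (use c b m_comm m_assoc m_lcomm in auto)
  also have "\<dots> = PIdl (c \<otimes> b)" unfolding cgenideal_def by auto
  finally show ?thesis .
qed

lemma Oquot_mult:
  assumes a: "a \<in> carrier R" "a \<noteq> \<zero>" and b: "b \<in> carrier R"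
  shows "card (Oquot (a \<otimes> b)) = card (Oquot a) * card (Oquot b)"
proof -
  have sub: "PIdl (a \<otimes> b) \<subseteq> PIdl a"
    unfolding cgenideal_def using a b m_assoc m_comm by (auto, metis m_closed)
  have PIc: "PIdl a \<subseteq> carrier R" using PIdl_subgroup[OF a(1)] subgroup.subset by force
  have "card (Oquot (a \<otimes> b)) = card (Oquot a) * card (cosets_in (add_monoid R) (PIdl (a \<otimes> b)) (PIdl a))"
    unfolding Oquot_eq
    by (rule group.cosets_tower[OF a_group PIdl_subgroup PIdl_subgroup carrier_subgroup sub PIc]) (use a b in auto)
  also have "cosets_in (add_monoid R) (PIdl (a \<otimes> b)) (PIdl a)
     = cosets_in (add_monoid R) ((\<lambda>w. a \<otimes> w) ` (PIdl b)) ((\<lambda>w. a \<otimes> w) ` carrier R)"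
    using mult_img_carrier[OF a(1)] mult_img_PIdl[OF a(1) b] by simp
  also have "card \<dots> = card (cosets_in (add_monoid R) (PIdl b) (carrier R))"
    by (rule group.cosets_inj_hom[OF a_group]) (use mult_hom[OF a(1)] mult_inj[OF a] PIdl_subgroup[OF b] carrier_subgroup
        subgroup.subset[OF PIdl_subgroup[OF b]] in auto)
  finally show ?thesis unfolding Oquot_eq .
qed

lemma Oquot_one: "card (Oquot \<one>) = 1"
proof -
  have "PIdl \<one> = carrier R" using mult_img_carrier[of \<one>] by simp
  then have "Oquot \<one> = (\<lambda>a. carrier R +> a) ` carrier R"
    unfolding Oquot_eq cosets_in_def a_r_coset_def by simp
  also have "\<dots> = {carrier R}"
  proof -
    have "carrier R +> a = carrier R" if "a \<in> carrier R" for a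
      using group.coset_join2[OF a_group, of a "carrier R"] that carrier_subgroup
      unfolding a_r_coset_def by simp
    then show ?thesis by auto
  qed
  finally show ?thesis by simp
qed

lemma Oquot_prod:
  assumes "finite I" "\<And>i. i \<in> I \<Longrightarrow> x i \<in> carrier R" "\<And>i. i \<in> I \<Longrightarrow> x i \<noteq> \<zero>"
  shows "(\<Prod>i\<in>I. card (Oquot (x i))) = card (Oquot (\<Otimes>i\<in>I. x i))"
  using assms
proof (induction I rule: finite_induct)
  case empty
  then show ?case using Oquot_one by simp
next
  case (insert j I)
  have xI: "x \<in> I \<rightarrow> carrier R" using insert by auto
  have "(\<Otimes>i\<in>insert j I. x i) = x j \<otimes> (\<Otimes>i\<in>I. x i)"
    by (rule finprod_insert) (use insert in auto)
  moreover have "card (Oquot (x j \<otimes> (\<Otimes>i\<in>I. x i))) = card (Oquot (x j)) * card (Oquot (\<Otimes>i\<in>I. x i))"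
    by (rule Oquot_mult) (use insert xI in auto)
  ultimately show ?case using insert by simp
qed

end

definition FG :: "('a,'b) ring_scheme \<Rightarrow> 'i set \<Rightarrow> ('i \<Rightarrow> 'a) monoid" where
  "FG Rg I = \<lparr>carrier = PiE I (\<lambda>_. carrier Rg), mult = cw_add Rg I, one = cw_zero Rg I\<rparr>"

context domain begin

lemma FG_simps: "carrier (FG R I) = PiE I (\<lambda>_. carrier R)" "mult (FG R I) = cw_add R I"
  "one (FG R I) = cw_zero R I"
  by (simp_all add: FG_def)

lemma cw_eqI: "f \<in> extensional I \<Longrightarrow> (\<And>i. i \<in> I \<Longrightarrow> f i = g i) \<Longrightarrow> f = (\<lambda>i\<in>I. g i)"
proof (rule ext)
  fix i assume f: "f \<in> extensional I" and fg: "\<And>i. i \<in> I \<Longrightarrow> f i = g i"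
  show "f i = (\<lambda>i\<in>I. g i) i"
  proof (cases "i \<in> I")
    case True then show ?thesis using fg by simp
  next
    case False then show ?thesis using extensional_arb[OF f False] by simp
  qed
qed

lemma PiE_c: "x \<in> PiE I (\<lambda>_. carrier R) \<Longrightarrow> i \<in> I \<Longrightarrow> x i \<in> carrier R"
  by (rule PiE_mem)

lemma cw_add_closed: "x \<in> PiE I (\<lambda>_. carrier R) \<Longrightarrow> y \<in> PiE I (\<lambda>_. carrier R) \<Longrightarrow>
    cw_add R I x y \<in> PiE I (\<lambda>_. carrier R)"
  unfolding cw_add_def by (rule restrict_PiE_iff[THEN iffD2]) (simp add: PiE_c)

lemma FG_assoc:
  assumes xyz: "x \<in> PiE I (\<lambda>_. carrier R)" "y \<in> PiE I (\<lambda>_. carrier R)" "z \<in> PiE I (\<lambda>_. carrier R)"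
  shows "cw_add R I (cw_add R I x y) z = cw_add R I x (cw_add R I y z)"
  unfolding cw_add_def
proof (rule restrict_ext)
  fix i assume i: "i \<in> I"
  have "x i \<in> carrier R" "y i \<in> carrier R" "z i \<in> carrier R"
    using xyz i by (simp_all add: PiE_c)
  then show "(\<lambda>i\<in>I. x i \<oplus> y i) i \<oplus> z i = x i \<oplus> (\<lambda>i\<in>I. y i \<oplus> z i) i"
    using i by (simp add: a_assoc)
qed

lemma FG_comm:
  assumes xy: "x \<in> PiE I (\<lambda>_. carrier R)" "y \<in> PiE I (\<lambda>_. carrier R)"
  shows "cw_add R I x y = cw_add R I y x"
  unfolding cw_add_def
proof (rule restrict_ext)
  fix i assume i: "i \<in> I"
  have "x i \<in> carrier R" "y i \<in> carrier R"
    using xy i by (simp_all add: PiE_c)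
  then show "x i \<oplus> y i = y i \<oplus> x i" by (simp add: a_comm)
qed

lemma FG_lzero:
  assumes x: "x \<in> PiE I (\<lambda>_. carrier R)"
  shows "cw_add R I (cw_zero R I) x = x"
  unfolding cw_add_def cw_zero_def
proof (rule sym, rule cw_eqI)
  show "x \<in> extensional I" using x by (simp add: PiE_iff)
  fix i assume i: "i \<in> I"
  have "x i \<in> carrier R" using x i by (simp add: PiE_c)
  then show "x i = (\<lambda>i\<in>I. \<zero>) i \<oplus> x i" using i by simp
qed

lemma FG_linv:
  assumes x: "x \<in> PiE I (\<lambda>_. carrier R)"
  shows "(\<lambda>i\<in>I. \<ominus> x i) \<in> PiE I (\<lambda>_. carrier R)" "cw_add R I (\<lambda>i\<in>I. \<ominus> x i) x = cw_zero R I"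
proof -
  show "(\<lambda>i\<in>I. \<ominus> x i) \<in> PiE I (\<lambda>_. carrier R)"
    by (rule restrict_PiE_iff[THEN iffD2]) (use x in \<open>simp add: PiE_c\<close>)
  show "cw_add R I (\<lambda>i\<in>I. \<ominus> x i) x = cw_zero R I"
    unfolding cw_add_def cw_zero_def
  proof (rule restrict_ext)
    fix i assume i: "i \<in> I"
    have "x i \<in> carrier R" using x i by (simp add: PiE_c)
    then show "(\<lambda>i\<in>I. \<ominus> x i) i \<oplus> x i = \<zero>" using i by (simp add: l_neg)
  qed
qed

lemma FG_comm_group: "comm_group (FG R I)"
proof (rule comm_groupI)
  fix x y assume "x \<in> carrier (FG R I)" "y \<in> carrier (FG R I)"
  then show "x \<otimes>\<^bsub>FG R I\<^esub> y \<in> carrier (FG R I)" unfolding FG_simps by (rule cw_add_closed)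
next
  show "\<one>\<^bsub>FG R I\<^esub> \<in> carrier (FG R I)" unfolding FG_simps cw_zero_def
    by (rule restrict_PiE_iff[THEN iffD2]) simp
next
  fix x y z assume "x \<in> carrier (FG R I)" "y \<in> carrier (FG R I)" "z \<in> carrier (FG R I)"
  then show "x \<otimes>\<^bsub>FG R I\<^esub> y \<otimes>\<^bsub>FG R I\<^esub> z = x \<otimes>\<^bsub>FG R I\<^esub> (y \<otimes>\<^bsub>FG R I\<^esub> z)"
    unfolding FG_simps by (rule FG_assoc)
next
  fix x y assume "x \<in> carrier (FG R I)" "y \<in> carrier (FG R I)"
  then show "x \<otimes>\<^bsub>FG R I\<^esub> y = y \<otimes>\<^bsub>FG R I\<^esub> x"
    unfolding FG_simps by (rule FG_comm)
next
  fix x assume "x \<in> carrier (FG R I)"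
  then show "\<one>\<^bsub>FG R I\<^esub> \<otimes>\<^bsub>FG R I\<^esub> x = x"
    unfolding FG_simps by (rule FG_lzero)
next
  fix x assume "x \<in> carrier (FG R I)"
  then show "\<exists>y\<in>carrier (FG R I). y \<otimes>\<^bsub>FG R I\<^esub> x = \<one>\<^bsub>FG R I\<^esub>"
    unfolding FG_simps using FG_linv by blast
qed

lemma FG_group: "group (FG R I)"
  using FG_comm_group unfolding comm_group_def by blast

lemma cw_mult_closed: "c \<in> PiE I (\<lambda>_. carrier R) \<Longrightarrow> w \<in> PiE I (\<lambda>_. carrier R) \<Longrightarrow>
    cw_mult R I c w \<in> PiE I (\<lambda>_. carrier R)"
  unfolding cw_mult_def by (rule restrict_PiE_iff[THEN iffD2]) (simp add: PiE_c)

lemma cw_mult_hom: assumes c: "c \<in> PiE I (\<lambda>_. carrier R)" shows "cw_mult R I c \<in> hom (FG R I) (FG R I)"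
proof (rule homI)
  fix x assume "x \<in> carrier (FG R I)"
  then show "cw_mult R I c x \<in> carrier (FG R I)" unfolding FG_simps using cw_mult_closed[OF c] by blast
next
  fix x y assume xy: "x \<in> carrier (FG R I)" "y \<in> carrier (FG R I)"
  show "cw_mult R I c (x \<otimes>\<^bsub>FG R I\<^esub> y) = cw_mult R I c x \<otimes>\<^bsub>FG R I\<^esub> cw_mult R I c y"
    unfolding FG_simps cw_add_def cw_mult_def
  proof (rule restrict_ext)
    fix i assume i: "i \<in> I"
    have "x i \<in> carrier R" "y i \<in> carrier R" "c i \<in> carrier R"
      using xy c i unfolding FG_simps by (simp_all add: PiE_c)
    then show "c i \<otimes> (\<lambda>i\<in>I. x i \<oplus> y i) i = (\<lambda>i\<in>I. c i \<otimes> x i) i \<oplus> (\<lambda>i\<in>I. c i \<otimes> y i) i"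
      using i by (simp add: r_distr)
  qed
qed

lemma cw_mult_inj: assumes c: "c \<in> PiE I (\<lambda>_. carrier R)" and nz: "\<And>i. i \<in> I \<Longrightarrow> c i \<noteq> \<zero>"
  shows "inj_on (cw_mult R I c) (carrier (FG R I))"
proof (rule inj_onI)
  fix u v assume u: "u \<in> carrier (FG R I)" and v: "v \<in> carrier (FG R I)" and e: "cw_mult R I c u = cw_mult R I c v"
  have u': "u \<in> PiE I (\<lambda>_. carrier R)" and v': "v \<in> PiE I (\<lambda>_. carrier R)" using u v unfolding FG_simps .
  show "u = v"
  proof (rule PiE_ext[OF u' v'])
    fix i assume i: "i \<in> I"
    have "c i \<otimes> u i = c i \<otimes> v i" using fun_cong[OF e, of i] i unfolding cw_mult_def by simp
    then show "u i = v i" using m_lcancel[OF nz[OF i] PiE_c[OF c i] PiE_c[OF u' i] PiE_c[OF v' i]] by simp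
  qed
qed

lemma restrict_eq_iff: "((\<lambda>i\<in>I. f i) = (\<lambda>i\<in>I. g i)) \<longleftrightarrow> (\<forall>i\<in>I. f i = g i)"
proof
  assume e: "(\<lambda>i\<in>I. f i) = (\<lambda>i\<in>I. g i)"
  show "\<forall>i\<in>I. f i = g i"
  proof
    fix i assume i: "i \<in> I"
    show "f i = g i" using fun_cong[OF e, of i] i by simp
  qed
next
  assume "\<forall>i\<in>I. f i = g i"
  then show "(\<lambda>i\<in>I. f i) = (\<lambda>i\<in>I. g i)" by (intro restrict_ext) simp
qed

lemma PIdl_coset_eq_iff:
  assumes "c \<in> carrier R" "a \<in> carrier R" "b \<in> carrier R"
  shows "(PIdl c +> a = PIdl c +> b) \<longleftrightarrow> (\<exists>x\<in>carrier R. a = c \<otimes> x \<oplus> b)"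
proof -
  have "(PIdl c +> a = PIdl c +> b) \<longleftrightarrow> (\<exists>h\<in>PIdl c. a = h \<oplus> b)"
  proof (rule a_rcos_eq_iff)
    show "subgroup (PIdl c) (add_monoid R)" using PIdl_subgroup[OF assms(1)] .
    then show "PIdl c \<subseteq> carrier R" using subgroup.subset by fastforce
  qed (use assms in auto)
  also have "\<dots> \<longleftrightarrow> (\<exists>x\<in>carrier R. a = c \<otimes> x \<oplus> b)"
  proof
    assume "\<exists>h\<in>PIdl c. a = h \<oplus> b"
    then obtain x where "x \<in> carrier R" "a = x \<otimes> c \<oplus> b" unfolding cgenideal_def by blast
    then show "\<exists>x\<in>carrier R. a = c \<otimes> x \<oplus> b" using m_comm[OF _ assms(1)] by metis
  next
    assume "\<exists>x\<in>carrier R. a = c \<otimes> x \<oplus> b"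
    then obtain x where "x \<in> carrier R" "a = x \<otimes> c \<oplus> b" using m_comm[OF _ assms(1)] by metis
    then show "\<exists>h\<in>PIdl c. a = h \<oplus> b" unfolding cgenideal_def by blast
  qed
  finally show ?thesis .
qed

lemma FG_quot_card:
  assumes I: "finite I" and c: "c \<in> PiE I (\<lambda>_. carrier R)"
  shows "card (cosets_in (FG R I) (cw_mult R I c ` carrier (FG R I)) (carrier (FG R I)))
       = (\<Prod>i\<in>I. card (Oquot (c i)))"
proof -
  let ?A = "carrier (FG R I)"
  let ?H = "cw_mult R I c ` ?A"
  have gh: "group_hom (FG R I) (FG R I) (cw_mult R I c)"
    unfolding group_hom_def group_hom_axioms_def using FG_group cw_mult_hom[OF c] by simp
  have Hs: "subgroup ?H (FG R I)"
    using group_hom.subgroup_img_is_subgroup[OF gh group.subgroup_self[OF FG_group]] .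
  have A: "?A = PiE I (\<lambda>_. carrier R)" by (rule FG_simps)
  have ci: "\<And>i. i \<in> I \<Longrightarrow> c i \<in> carrier R" using c by (rule PiE_c)
  have "card (cosets_in (FG R I) ?H ?A) = card ((\<lambda>y. \<lambda>i\<in>I. PIdl (c i) +> y i) ` ?A)"
    unfolding cosets_in_def
  proof (rule card_image_iff)
    fix y y' assume y: "y \<in> ?A" and y': "y' \<in> ?A"
    have yP: "y \<in> PiE I (\<lambda>_. carrier R)" "y' \<in> PiE I (\<lambda>_. carrier R)" using y y' unfolding A .
    have yc: "\<And>i. i \<in> I \<Longrightarrow> y i \<in> carrier R" "\<And>i. i \<in> I \<Longrightarrow> y' i \<in> carrier R"
      using yP by (simp_all add: PiE_c)
    have "(?H #>\<^bsub>FG R I\<^esub> y = ?H #>\<^bsub>FG R I\<^esub> y') \<longleftrightarrow> (\<exists>h\<in>?H. y = h \<otimes>\<^bsub>FG R I\<^esub> y')"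
      by (rule group.rcos_eq_iff2[OF FG_group Hs y y'])
    also have "\<dots> \<longleftrightarrow> (\<exists>w\<in>?A. \<forall>i\<in>I. y i = c i \<otimes> w i \<oplus> y' i)"
    proof
      assume "\<exists>h\<in>?H. y = h \<otimes>\<^bsub>FG R I\<^esub> y'"
      then obtain w where w: "w \<in> ?A" "y = cw_add R I (cw_mult R I c w) y'" unfolding FG_simps by blast
      have "\<forall>i\<in>I. y i = c i \<otimes> w i \<oplus> y' i"
      proof
        fix i assume i: "i \<in> I"
        show "y i = c i \<otimes> w i \<oplus> y' i" using fun_cong[OF w(2), of i] i unfolding cw_add_def cw_mult_def by simp
      qed
      then show "\<exists>w\<in>?A. \<forall>i\<in>I. y i = c i \<otimes> w i \<oplus> y' i" using w(1) by blast
    next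
      assume "\<exists>w\<in>?A. \<forall>i\<in>I. y i = c i \<otimes> w i \<oplus> y' i"
      then obtain w where w: "w \<in> ?A" "\<forall>i\<in>I. y i = c i \<otimes> w i \<oplus> y' i" by blast
      have "y = cw_add R I (cw_mult R I c w) y'"
        unfolding cw_add_def cw_mult_def
      proof (rule cw_eqI)
        show "y \<in> extensional I" using yP(1) by (simp add: PiE_iff)
        fix i assume i: "i \<in> I"
        show "y i = (\<lambda>i\<in>I. c i \<otimes> w i) i \<oplus> y' i" using w(2) i by simp
      qed
      then show "\<exists>h\<in>?H. y = h \<otimes>\<^bsub>FG R I\<^esub> y'" using w(1) unfolding FG_simps by blast
    qed
    also have "\<dots> \<longleftrightarrow> (\<forall>i\<in>I. \<exists>x\<in>carrier R. y i = c i \<otimes> x \<oplus> y' i)"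
    proof
      assume "\<exists>w\<in>?A. \<forall>i\<in>I. y i = c i \<otimes> w i \<oplus> y' i"
      then obtain w where w: "w \<in> PiE I (\<lambda>_. carrier R)" "\<forall>i\<in>I. y i = c i \<otimes> w i \<oplus> y' i"
        unfolding A by blast
      show "\<forall>i\<in>I. \<exists>x\<in>carrier R. y i = c i \<otimes> x \<oplus> y' i"
      proof
        fix i assume i: "i \<in> I"
        show "\<exists>x\<in>carrier R. y i = c i \<otimes> x \<oplus> y' i" using w(2) i PiE_c[OF w(1) i] by blast
      qed
    next
      assume h: "\<forall>i\<in>I. \<exists>x\<in>carrier R. y i = c i \<otimes> x \<oplus> y' i"
      define w where "w = (\<lambda>i\<in>I. SOME x. x \<in> carrier R \<and> y i = c i \<otimes> x \<oplus> y' i)"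
      have wi: "w i \<in> carrier R \<and> y i = c i \<otimes> w i \<oplus> y' i" if "i \<in> I" for i
      proof -
        have "\<exists>x. x \<in> carrier R \<and> y i = c i \<otimes> x \<oplus> y' i" using h that by blast
        from someI_ex[OF this] show ?thesis unfolding w_def using that by simp
      qed
      have "w \<in> ?A" unfolding A w_def
        by (rule restrict_PiE_iff[THEN iffD2]) (use wi in \<open>simp add: w_def\<close>)
      moreover have "\<forall>i\<in>I. y i = c i \<otimes> w i \<oplus> y' i" using wi by blast
      ultimately show "\<exists>w\<in>?A. \<forall>i\<in>I. y i = c i \<otimes> w i \<oplus> y' i" by blast
    qed
    also have "\<dots> \<longleftrightarrow> (\<forall>i\<in>I. PIdl (c i) +> y i = PIdl (c i) +> y' i)"
      using PIdl_coset_eq_iff[OF ci yc(1) yc(2)] by blast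
    also have "\<dots> \<longleftrightarrow> ((\<lambda>i\<in>I. PIdl (c i) +> y i) = (\<lambda>i\<in>I. PIdl (c i) +> y' i))"
      by (rule restrict_eq_iff[symmetric])
    finally show "(?H #>\<^bsub>FG R I\<^esub> y = ?H #>\<^bsub>FG R I\<^esub> y') \<longleftrightarrow>
        ((\<lambda>i\<in>I. PIdl (c i) +> y i) = (\<lambda>i\<in>I. PIdl (c i) +> y' i))" .
  qed
  also have "(\<lambda>y. \<lambda>i\<in>I. PIdl (c i) +> y i) ` ?A = PiE I (\<lambda>i. Oquot (c i))"
  proof
    show "(\<lambda>y. \<lambda>i\<in>I. PIdl (c i) +> y i) ` ?A \<subseteq> PiE I (\<lambda>i. Oquot (c i))"
    proof
      fix Y assume "Y \<in> (\<lambda>y. \<lambda>i\<in>I. PIdl (c i) +> y i) ` ?A"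
      then obtain y where y: "y \<in> PiE I (\<lambda>_. carrier R)" "Y = (\<lambda>i\<in>I. PIdl (c i) +> y i)" unfolding A by blast
      have "(\<lambda>i\<in>I. PIdl (c i) +> y i) \<in> PiE I (\<lambda>i. Oquot (c i))"
      proof (rule restrict_PiE_iff[THEN iffD2], intro ballI)
        fix i assume i: "i \<in> I"
        show "PIdl (c i) +> y i \<in> Oquot (c i)" unfolding Oquot_eq cosets_in_def a_r_coset_def
          using PiE_c[OF y(1) i] by (rule imageI)
      qed
      then show "Y \<in> PiE I (\<lambda>i. Oquot (c i))" using y(2) by simp
    qed
  next
    show "PiE I (\<lambda>i. Oquot (c i)) \<subseteq> (\<lambda>y. \<lambda>i\<in>I. PIdl (c i) +> y i) ` ?A"
    proof
      fix \<Phi> assume \<Phi>: "\<Phi> \<in> PiE I (\<lambda>i. Oquot (c i))"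
      have h: "\<exists>a. a \<in> carrier R \<and> \<Phi> i = PIdl (c i) +> a" if i: "i \<in> I" for i
      proof -
        have "\<Phi> i \<in> Oquot (c i)" using \<Phi> i by (rule PiE_mem)
        then show ?thesis unfolding Oquot_eq cosets_in_def a_r_coset_def by blast
      qed
      define y where "y = (\<lambda>i\<in>I. SOME a. a \<in> carrier R \<and> \<Phi> i = PIdl (c i) +> a)"
      have yi: "y i \<in> carrier R \<and> \<Phi> i = PIdl (c i) +> y i" if "i \<in> I" for i
        using someI_ex[OF h[OF that]] that unfolding y_def by simp
      have "y \<in> ?A" unfolding A y_def
        by (rule restrict_PiE_iff[THEN iffD2]) (use yi in \<open>simp add: y_def\<close>)
      moreover have "\<Phi> = (\<lambda>i\<in>I. PIdl (c i) +> y i)"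
      proof (rule cw_eqI)
        show "\<Phi> \<in> extensional I" using \<Phi> by (simp add: PiE_iff)
        fix i assume "i \<in> I" then show "\<Phi> i = PIdl (c i) +> y i" using yi by blast
      qed
      ultimately show "\<Phi> \<in> (\<lambda>y. \<lambda>i\<in>I. PIdl (c i) +> y i) ` ?A" by blast
    qed
  qed
  also have "card (PiE I (\<lambda>i. Oquot (c i))) = (\<Prod>i\<in>I. card (Oquot (c i)))"
    using card_PiE[OF I] .
  finally show ?thesis .
qed

end

context domain begin

lemma Oquot_nonempty: "c \<in> carrier R \<Longrightarrow> Oquot c \<noteq> {}"
  unfolding Oquot_eq cosets_in_def by blast

lemma main_index:
  assumes I: "finite I" and Rs: "subgroup Rset (FG R I)"
    and x: "x \<in> PiE I (\<lambda>_. carrier R)" and xnz: "\<And>i. i \<in> I \<Longrightarrow> x i \<noteq> \<zero>"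
    and xR: "cw_mult R I x ` Rset \<subseteq> Rset"
    and d: "d \<in> PiE I (\<lambda>_. carrier R)" and dnz: "\<And>i. i \<in> I \<Longrightarrow> d i \<noteq> \<zero>"
    and dR: "cw_mult R I d ` carrier (FG R I) \<subseteq> Rset"
    and dfin: "\<And>i. i \<in> I \<Longrightarrow> finite (Oquot (d i))"
  shows "card (cosets_in (FG R I) (cw_mult R I x ` Rset) Rset) = (\<Prod>i\<in>I. card (Oquot (x i)))"
proof -
  let ?A = "carrier (FG R I)"
  let ?f = "cw_mult R I x"
  let ?g = "cw_mult R I d"
  have grp: "group (FG R I)" by (rule FG_group)
  have Asub: "subgroup ?A (FG R I)" by (rule group.subgroup_self[OF grp])
  have ghf: "group_hom (FG R I) (FG R I) ?f"
    unfolding group_hom_def group_hom_axioms_def using FG_group cw_mult_hom[OF x] by simp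
  have ghg: "group_hom (FG R I) (FG R I) ?g"
    unfolding group_hom_def group_hom_axioms_def using FG_group cw_mult_hom[OF d] by simp
  have fRs: "subgroup (?f ` Rset) (FG R I)" by (rule group_hom.subgroup_img_is_subgroup[OF ghf Rs])
  have fAs: "subgroup (?f ` ?A) (FG R I)" by (rule group_hom.subgroup_img_is_subgroup[OF ghf Asub])
  have gAs: "subgroup (?g ` ?A) (FG R I)" by (rule group_hom.subgroup_img_is_subgroup[OF ghg Asub])
  have RA: "Rset \<subseteq> ?A" using Rs by (rule subgroup.subset)
  have fA: "?f ` ?A \<subseteq> ?A" using cw_mult_closed[OF x] unfolding FG_simps by blast
  have T1: "card (cosets_in (FG R I) (?f ` Rset) ?A)
      = card (cosets_in (FG R I) Rset ?A) * card (cosets_in (FG R I) (?f ` Rset) Rset)"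
    by (rule group.cosets_tower[OF grp fRs Rs Asub xR RA])
  have T2: "card (cosets_in (FG R I) (?f ` Rset) ?A)
      = card (cosets_in (FG R I) (?f ` ?A) ?A) * card (cosets_in (FG R I) (?f ` Rset) (?f ` ?A))"
    by (rule group.cosets_tower[OF grp fRs fAs Asub]) (use RA fA in auto)
  have E1: "card (cosets_in (FG R I) (?f ` Rset) (?f ` ?A)) = card (cosets_in (FG R I) Rset ?A)"
    by (rule group.cosets_inj_hom[OF grp cw_mult_hom[OF x] cw_mult_inj[OF x xnz] Rs Asub RA])
  have E2: "card (cosets_in (FG R I) (?f ` ?A) ?A) = (\<Prod>i\<in>I. card (Oquot (x i)))"
    by (rule FG_quot_card[OF I x])
  have T3: "card (cosets_in (FG R I) (?g ` ?A) ?A)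
      = card (cosets_in (FG R I) Rset ?A) * card (cosets_in (FG R I) (?g ` ?A) Rset)"
    by (rule group.cosets_tower[OF grp gAs Rs Asub dR RA])
  have "card (cosets_in (FG R I) (?g ` ?A) ?A) = (\<Prod>i\<in>I. card (Oquot (d i)))"
    by (rule FG_quot_card[OF I d])
  also have "\<dots> \<noteq> 0"
  proof -
    have "card (Oquot (d i)) \<noteq> 0" if "i \<in> I" for i
      using dfin[OF that] Oquot_nonempty[OF PiE_c[OF d that]] by simp
    then show ?thesis using I by simp
  qed
  finally have nz: "card (cosets_in (FG R I) Rset ?A) \<noteq> 0" using T3 by simp
  have "card (cosets_in (FG R I) Rset ?A) * card (cosets_in (FG R I) (?f ` Rset) Rset)
      = card (cosets_in (FG R I) Rset ?A) * (\<Prod>i\<in>I. card (Oquot (x i)))"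
    using T1 T2 E1 E2 by (metis mult.commute)
  then show ?thesis using nz by simp
qed

end

lemma (in comm_monoid) finprod_swap:
  assumes A: "finite A" and B: "finite B" and f: "\<And>a b. a \<in> A \<Longrightarrow> b \<in> B \<Longrightarrow> f a b \<in> carrier G"
  shows "(\<Otimes>a\<in>A. \<Otimes>b\<in>B. f a b) = (\<Otimes>b\<in>B. \<Otimes>a\<in>A. f a b)"
  using A f
proof (induction A rule: finite_induct)
  case empty
  then show ?case by simp
next
  case (insert x A)
  have fx: "(\<lambda>b. f x b) \<in> B \<rightarrow> carrier G" using insert.prems by blast
  have fA: "(\<lambda>b. \<Otimes>a\<in>A. f a b) \<in> B \<rightarrow> carrier G"
    using insert.prems by (intro Pi_I finprod_closed) blast
  have inner: "(\<lambda>a. \<Otimes>b\<in>B. f a b) \<in> A \<rightarrow> carrier G"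
    using insert.prems by (intro Pi_I finprod_closed) blast
  have "(\<Otimes>a\<in>insert x A. \<Otimes>b\<in>B. f a b) = (\<Otimes>b\<in>B. f x b) \<otimes> (\<Otimes>a\<in>A. \<Otimes>b\<in>B. f a b)"
    by (rule finprod_insert) (use insert inner fx in \<open>auto intro: finprod_closed\<close>)
  also have "(\<Otimes>a\<in>A. \<Otimes>b\<in>B. f a b) = (\<Otimes>b\<in>B. \<Otimes>a\<in>A. f a b)"
    using insert.IH insert.prems by blast
  also have "(\<Otimes>b\<in>B. f x b) \<otimes> (\<Otimes>b\<in>B. \<Otimes>a\<in>A. f a b) = (\<Otimes>b\<in>B. f x b \<otimes> (\<Otimes>a\<in>A. f a b))"
    by (rule finprod_multf[symmetric]) (use fx fA in auto)
  also have "\<dots> = (\<Otimes>b\<in>B. \<Otimes>a\<in>insert x A. f a b)"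
  proof (rule finprod_cong')
    show "(\<lambda>b. \<Otimes>a\<in>insert x A. f a b) \<in> B \<rightarrow> carrier G"
      using insert.prems by (intro Pi_I finprod_closed) blast
    fix b assume b: "b \<in> B"
    have "(\<lambda>a. f a b) \<in> A \<rightarrow> carrier G" using insert.prems b by blast
    moreover have "f x b \<in> carrier G" using insert.prems b by blast
    ultimately show "f x b \<otimes> (\<Otimes>a\<in>A. f a b) = (\<Otimes>a\<in>insert x A. f a b)"
      using insert.hyps by simp
  qed simp
  finally show ?case .
qed

lemma (in domain) roots_unity_finite:
  fixes n :: nat assumes n: "n > 0"
  shows "finite {z \<in> carrier R. z [^] n = \<one>}"
proof -
  define p where "p = monom \<one> (n - 1) @ [\<ominus> \<one>]"
  have setp: "set p \<subseteq> carrier R" unfolding p_def monom_def by (auto simp: set_replicate_conv_if)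
  have "polynomial (carrier R) p" unfolding polynomial_def using setp by (simp add: p_def monom_def)
  then have pc: "p \<in> carrier (poly_ring R)" using univ_poly_carrier by blast
  have "{z \<in> carrier R. z [^] n = \<one>} \<subseteq> {x. is_root p x}"
  proof
    fix z assume "z \<in> {z \<in> carrier R. z [^] n = \<one>}"
    then have z: "z \<in> carrier R" "z [^] n = \<one>" by auto
    have "eval p z = eval (monom \<one> (n - 1)) z \<otimes> z \<oplus> \<ominus> \<one>"
      unfolding p_def by (rule eval_append_aux) (use z monom_def in \<open>auto simp: set_replicate_conv_if\<close>)
    also have "\<dots> = (\<one> \<otimes> z [^] (n - 1)) \<otimes> z \<oplus> \<ominus> \<one>" using eval_monom[of \<one> z "n - 1"] z by simp
    also have "\<dots> = z [^] n \<oplus> \<ominus> \<one>"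
    proof -
      have "z [^] (n - 1) \<otimes> z = z [^] (Suc (n - 1))" using z by (simp add: nat_pow_Suc)
      then show ?thesis using n z by simp
    qed
    also have "\<dots> = \<zero>" using z by (simp add: r_neg)
    finally have "eval p z = \<zero>" .
    then show "z \<in> {x. is_root p x}" unfolding is_root_def p_def using z by simp
  qed
  then show ?thesis using finite_number_of_roots[OF pc] finite_subset by blast
qed

locale charsetup = G: comm_group G + O: domain Ok
  for G :: "('g, 'c) monoid_scheme" and Ok :: "('a, 'b) ring_scheme" +
  assumes Gfin: "finite (carrier G)"
begin

abbreviation N where "N \<equiv> card (carrier G)"

lemma N_pos: "N > 0"
  using Gfin G.one_closed card_gt_0_iff by blast

lemma chi_hom: "\<chi> \<in> characters G Ok \<Longrightarrow> group_hom G (units_of Ok) \<chi>"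
  unfolding characters_def group_hom_def group_hom_axioms_def
  using G.is_group O.units_group by blast

lemma chi_closed: "\<chi> \<in> characters G Ok \<Longrightarrow> g \<in> carrier G \<Longrightarrow> \<chi> g \<in> carrier Ok"
  using group_hom.hom_closed[OF chi_hom] units_of_carrier O.Units_closed by metis

lemma chi_mult: "\<chi> \<in> characters G Ok \<Longrightarrow> g \<in> carrier G \<Longrightarrow> h \<in> carrier G \<Longrightarrow>
    \<chi> (g \<otimes>\<^bsub>G\<^esub> h) = \<chi> g \<otimes>\<^bsub>Ok\<^esub> \<chi> h"
  using group_hom.hom_mult[OF chi_hom] units_of_mult by metis

lemma chi_one: "\<chi> \<in> characters G Ok \<Longrightarrow> \<chi> \<one>\<^bsub>G\<^esub> = \<one>\<^bsub>Ok\<^esub>"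
  using group_hom.hom_one[OF chi_hom] units_of_one by metis

lemma chi_inv: "\<chi> \<in> characters G Ok \<Longrightarrow> g \<in> carrier G \<Longrightarrow> \<chi> (inv\<^bsub>G\<^esub> g) \<otimes>\<^bsub>Ok\<^esub> \<chi> g = \<one>\<^bsub>Ok\<^esub>"
  using chi_mult[of \<chi> "inv\<^bsub>G\<^esub> g" g] chi_one[of \<chi>] by simp

lemma chi_ext: "\<chi> \<in> characters G Ok \<Longrightarrow> \<chi> \<in> extensional (carrier G)"
  unfolding characters_def by blast

lemma chi_pow: "\<chi> \<in> characters G Ok \<Longrightarrow> g \<in> carrier G \<Longrightarrow> \<chi> g [^]\<^bsub>Ok\<^esub> N = \<one>\<^bsub>Ok\<^esub>"
proof -
  assume chi: "\<chi> \<in> characters G Ok" and g: "g \<in> carrier G"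
  have "\<chi> (g [^]\<^bsub>G\<^esub> N) = \<chi> g [^]\<^bsub>units_of Ok\<^esub> N"
    using group_hom.hom_nat_pow[OF chi_hom[OF chi] g] .
  also have "\<dots> = \<chi> g [^]\<^bsub>Ok\<^esub> N"
    using O.units_of_pow group_hom.hom_closed[OF chi_hom[OF chi] g] units_of_carrier by metis
  finally have "\<chi> g [^]\<^bsub>Ok\<^esub> N = \<chi> (g [^]\<^bsub>G\<^esub> N)" by simp
  also have "g [^]\<^bsub>G\<^esub> N = \<one>\<^bsub>G\<^esub>" using G.pow_order_eq_1[OF g] unfolding order_def .
  finally show ?thesis using chi_one[OF chi] by simp
qed

lemma characters_finite: "finite (characters G Ok)"
proof -
  have "characters G Ok \<subseteq> PiE (carrier G) (\<lambda>_. {z \<in> carrier Ok. z [^]\<^bsub>Ok\<^esub> N = \<one>\<^bsub>Ok\<^esub>})"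
  proof
    fix \<chi> assume chi: "\<chi> \<in> characters G Ok"
    show "\<chi> \<in> PiE (carrier G) (\<lambda>_. {z \<in> carrier Ok. z [^]\<^bsub>Ok\<^esub> N = \<one>\<^bsub>Ok\<^esub>})"
      unfolding PiE_def using chi_closed[OF chi] chi_pow[OF chi] chi_ext[OF chi] by blast
  qed
  moreover have "finite (PiE (carrier G) (\<lambda>_. {z \<in> carrier Ok. z [^]\<^bsub>Ok\<^esub> N = \<one>\<^bsub>Ok\<^esub>}))"
    by (rule finite_PiE[OF Gfin]) (rule O.roots_unity_finite[OF N_pos])
  ultimately show ?thesis by (rule finite_subset)
qed

lemma lmult_image: "h \<in> carrier G \<Longrightarrow> (\<lambda>g. h \<otimes>\<^bsub>G\<^esub> g) ` carrier G = carrier G"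
proof -
  assume h: "h \<in> carrier G"
  have "g \<in> (\<lambda>g. h \<otimes>\<^bsub>G\<^esub> g) ` carrier G" if g: "g \<in> carrier G" for g
  proof
    show "g = h \<otimes>\<^bsub>G\<^esub> (inv\<^bsub>G\<^esub> h \<otimes>\<^bsub>G\<^esub> g)" using h g by (simp add: G.m_assoc[symmetric])
    show "inv\<^bsub>G\<^esub> h \<otimes>\<^bsub>G\<^esub> g \<in> carrier G" using h g by simp
  qed
  then show ?thesis using h by auto
qed

lemma lmult_inj: "h \<in> carrier G \<Longrightarrow> inj_on (\<lambda>g. h \<otimes>\<^bsub>G\<^esub> g) (carrier G)"
  by (rule inj_onI) (use G.l_cancel in blast)

lemma sum_one: "(\<Oplus>\<^bsub>Ok\<^esub> g\<in>carrier G. \<one>\<^bsub>Ok\<^esub>) = [N] \<cdot>\<^bsub>Ok\<^esub> \<one>\<^bsub>Ok\<^esub>"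
  using O.add.finprod_const[of "\<one>\<^bsub>Ok\<^esub>" "carrier G"] by simp

lemma orthogonality:
  assumes psi: "\<psi> \<in> characters G Ok" and phi: "\<phi> \<in> characters G Ok"
  shows "(\<Oplus>\<^bsub>Ok\<^esub> g\<in>carrier G. \<psi> (inv\<^bsub>G\<^esub> g) \<otimes>\<^bsub>Ok\<^esub> \<phi> g)
       = (if \<psi> = \<phi> then [N] \<cdot>\<^bsub>Ok\<^esub> \<one>\<^bsub>Ok\<^esub> else \<zero>\<^bsub>Ok\<^esub>)"
proof (cases "\<psi> = \<phi>")
  case True
  have "(\<Oplus>\<^bsub>Ok\<^esub> g\<in>carrier G. \<psi> (inv\<^bsub>G\<^esub> g) \<otimes>\<^bsub>Ok\<^esub> \<phi> g) = (\<Oplus>\<^bsub>Ok\<^esub> g\<in>carrier G. \<one>\<^bsub>Ok\<^esub>)"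
    by (rule O.add.finprod_cong') (use chi_inv[OF psi] True in auto)
  then show ?thesis using True sum_one by simp
next
  case False
  define \<chi> where "\<chi> = (\<lambda>g. \<psi> (inv\<^bsub>G\<^esub> g) \<otimes>\<^bsub>Ok\<^esub> \<phi> g)"
  have chic: "\<chi> g \<in> carrier Ok" if "g \<in> carrier G" for g
    unfolding \<chi>_def using that chi_closed[OF psi] chi_closed[OF phi] by simp
  have chiPi: "\<chi> \<in> carrier G \<rightarrow> carrier Ok" using chic by blast
  obtain h where h: "h \<in> carrier G" "\<psi> h \<noteq> \<phi> h"
    using False extensionalityI[OF chi_ext[OF psi] chi_ext[OF phi]] by blast
  have chimult: "\<chi> (h \<otimes>\<^bsub>G\<^esub> g) = \<chi> h \<otimes>\<^bsub>Ok\<^esub> \<chi> g" if g: "g \<in> carrier G" for g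
  proof -
    have "inv\<^bsub>G\<^esub> (h \<otimes>\<^bsub>G\<^esub> g) = inv\<^bsub>G\<^esub> h \<otimes>\<^bsub>G\<^esub> inv\<^bsub>G\<^esub> g"
      using h g G.inv_mult_group G.m_comm by simp
    then have "\<chi> (h \<otimes>\<^bsub>G\<^esub> g) = (\<psi> (inv\<^bsub>G\<^esub> h) \<otimes>\<^bsub>Ok\<^esub> \<psi> (inv\<^bsub>G\<^esub> g)) \<otimes>\<^bsub>Ok\<^esub> (\<phi> h \<otimes>\<^bsub>Ok\<^esub> \<phi> g)"
      unfolding \<chi>_def using h g chi_mult[OF psi] chi_mult[OF phi] by simp
    also have "\<dots> = \<chi> h \<otimes>\<^bsub>Ok\<^esub> \<chi> g"
      unfolding \<chi>_def using h g chi_closed[OF psi] chi_closed[OF phi] by (simp add: O.m_ac)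
    finally show ?thesis .
  qed
  have chih: "\<chi> h \<noteq> \<one>\<^bsub>Ok\<^esub>"
  proof
    assume e: "\<chi> h = \<one>\<^bsub>Ok\<^esub>"
    have "\<psi> h = \<psi> h \<otimes>\<^bsub>Ok\<^esub> \<chi> h" using e chi_closed[OF psi h(1)] by simp
    also have "\<dots> = (\<psi> (inv\<^bsub>G\<^esub> h) \<otimes>\<^bsub>Ok\<^esub> \<psi> h) \<otimes>\<^bsub>Ok\<^esub> \<phi> h"
      unfolding \<chi>_def using h chi_closed[OF psi] chi_closed[OF phi] by (simp add: O.m_ac)
    also have "\<dots> = \<phi> h" using chi_inv[OF psi h(1)] chi_closed[OF phi h(1)] by simp
    finally show False using h(2) by simp
  qed
  let ?S = "\<Oplus>\<^bsub>Ok\<^esub> g\<in>carrier G. \<chi> g"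
  have Sc: "?S \<in> carrier Ok" using chiPi by simp
  have "?S = (\<Oplus>\<^bsub>Ok\<^esub> g\<in>(\<lambda>g. h \<otimes>\<^bsub>G\<^esub> g) ` carrier G. \<chi> g)" using lmult_image[OF h(1)] by simp
  also have "\<dots> = (\<Oplus>\<^bsub>Ok\<^esub> g\<in>carrier G. \<chi> (h \<otimes>\<^bsub>G\<^esub> g))"
    by (rule O.finsum_reindex) (use lmult_image[OF h(1)] chiPi lmult_inj[OF h(1)] in auto)
  also have "\<dots> = (\<Oplus>\<^bsub>Ok\<^esub> g\<in>carrier G. \<chi> h \<otimes>\<^bsub>Ok\<^esub> \<chi> g)"
    by (rule O.add.finprod_cong') (use chimult chic h in auto)
  also have "\<dots> = \<chi> h \<otimes>\<^bsub>Ok\<^esub> ?S"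
    by (rule O.finsum_rdistr[symmetric]) (use Gfin chic h chiPi in auto)
  finally have e: "\<one>\<^bsub>Ok\<^esub> \<otimes>\<^bsub>Ok\<^esub> ?S = \<chi> h \<otimes>\<^bsub>Ok\<^esub> ?S" using Sc by simp
  have "?S = \<zero>\<^bsub>Ok\<^esub>"
  proof (rule ccontr)
    assume "?S \<noteq> \<zero>\<^bsub>Ok\<^esub>"
    then have "\<one>\<^bsub>Ok\<^esub> = \<chi> h" using O.m_rcancel[of ?S "\<one>\<^bsub>Ok\<^esub>" "\<chi> h"] e Sc chic[OF h(1)] by simp
    then show False using chih by simp
  qed
  then show ?thesis using False unfolding \<chi>_def by simp
qed

end

lemma (in domain) FG_inv:
  assumes y: "y \<in> carrier (FG R I)"
  shows "inv\<^bsub>FG R I\<^esub> y = (\<lambda>i\<in>I. \<ominus> y i)"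
proof (rule group.inv_equality[OF FG_group])
  have y': "y \<in> PiE I (\<lambda>_. carrier R)" using y unfolding FG_simps .
  show "(\<lambda>i\<in>I. \<ominus> y i) \<otimes>\<^bsub>FG R I\<^esub> y = \<one>\<^bsub>FG R I\<^esub>" unfolding FG_simps using FG_linv(2)[OF y'] .
  show "y \<in> carrier (FG R I)" by (rule y)
  show "(\<lambda>i\<in>I. \<ominus> y i) \<in> carrier (FG R I)" unfolding FG_simps using FG_linv(1)[OF y'] .
qed

locale charset = charsetup +
  fixes \<Psi>
  assumes Psi: "\<Psi> \<subseteq> characters G Ok"
begin

lemma Psi_finite: "finite \<Psi>"
  using Psi characters_finite finite_subset by blast

abbreviation ce where "ce \<equiv> char_eval G Ok"

lemma ce_closed: "\<phi> \<in> characters G Ok \<Longrightarrow> a \<in> carrier G \<rightarrow> carrier Ok \<Longrightarrow> ce \<phi> a \<in> carrier Ok"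
  unfolding char_eval_def by (rule O.finsum_closed) (use chi_closed in blast)

lemma RP_mem: "x \<in> char_group_ring G Ok \<Psi> \<longleftrightarrow> (\<exists>a. a \<in> carrier G \<rightarrow> carrier Ok \<and> x = (\<lambda>\<psi>\<in>\<Psi>. ce \<psi> a))"
  unfolding char_group_ring_def by blast

lemma RP_sub: "char_group_ring G Ok \<Psi> \<subseteq> PiE \<Psi> (\<lambda>_. carrier Ok)"
proof
  fix x assume "x \<in> char_group_ring G Ok \<Psi>"
  then obtain a where a: "a \<in> carrier G \<rightarrow> carrier Ok" "x = (\<lambda>\<psi>\<in>\<Psi>. ce \<psi> a)" using RP_mem by blast
  show "x \<in> PiE \<Psi> (\<lambda>_. carrier Ok)" unfolding a(2)
    by (rule restrict_PiE_iff[THEN iffD2]) (use ce_closed a(1) Psi in blast)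
qed

lemma ce_add:
  assumes phi: "\<phi> \<in> characters G Ok" and a: "a \<in> carrier G \<rightarrow> carrier Ok" and b: "b \<in> carrier G \<rightarrow> carrier Ok"
  shows "ce \<phi> (\<lambda>g. a g \<oplus>\<^bsub>Ok\<^esub> b g) = ce \<phi> a \<oplus>\<^bsub>Ok\<^esub> ce \<phi> b"
proof -
  have ac: "\<And>g. g \<in> carrier G \<Longrightarrow> a g \<in> carrier Ok" "\<And>g. g \<in> carrier G \<Longrightarrow> b g \<in> carrier Ok"
    using a b by (simp_all add: Pi_iff)
  have "ce \<phi> (\<lambda>g. a g \<oplus>\<^bsub>Ok\<^esub> b g) = (\<Oplus>\<^bsub>Ok\<^esub> g\<in>carrier G. a g \<otimes>\<^bsub>Ok\<^esub> \<phi> g \<oplus>\<^bsub>Ok\<^esub> b g \<otimes>\<^bsub>Ok\<^esub> \<phi> g)"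
    unfolding char_eval_def
    by (rule O.add.finprod_cong') (use ac chi_closed[OF phi] O.l_distr in auto)
  also have "\<dots> = ce \<phi> a \<oplus>\<^bsub>Ok\<^esub> ce \<phi> b"
    unfolding char_eval_def
    by (rule O.finsum_addf) (use a b chi_closed[OF phi] in auto)
  finally show ?thesis .
qed

lemma ce_zero:
  assumes phi: "\<phi> \<in> characters G Ok"
  shows "ce \<phi> (\<lambda>g. \<zero>\<^bsub>Ok\<^esub>) = \<zero>\<^bsub>Ok\<^esub>"
  unfolding char_eval_def
  by (rule O.add.finprod_one_eqI) (use chi_closed[OF phi] in simp)

lemma ce_neg:
  assumes phi: "\<phi> \<in> characters G Ok" and a: "a \<in> carrier G \<rightarrow> carrier Ok"
  shows "ce \<phi> (\<lambda>g. \<ominus>\<^bsub>Ok\<^esub> a g) = \<ominus>\<^bsub>Ok\<^esub> ce \<phi> a"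
proof -
  have na: "(\<lambda>g. \<ominus>\<^bsub>Ok\<^esub> a g) \<in> carrier G \<rightarrow> carrier Ok" using a by auto
  have ac: "\<And>g. g \<in> carrier G \<Longrightarrow> a g \<in> carrier Ok" using a by (simp add: Pi_iff)
  have "ce \<phi> (\<lambda>g. \<ominus>\<^bsub>Ok\<^esub> a g) \<oplus>\<^bsub>Ok\<^esub> ce \<phi> a = ce \<phi> (\<lambda>g. \<ominus>\<^bsub>Ok\<^esub> a g \<oplus>\<^bsub>Ok\<^esub> a g)"
    using ce_add[OF phi na a] by simp
  also have "\<dots> = ce \<phi> (\<lambda>g. \<zero>\<^bsub>Ok\<^esub>)"
    unfolding char_eval_def
    by (rule O.add.finprod_cong') (use ac chi_closed[OF phi] O.l_neg in auto)
  also have "\<dots> = \<zero>\<^bsub>Ok\<^esub>" by (rule ce_zero[OF phi])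
  finally show ?thesis using O.minus_equality[OF _ ce_closed[OF phi a] ce_closed[OF phi na]] by simp
qed

lemma RP_subgroup: "subgroup (char_group_ring G Ok \<Psi>) (FG Ok \<Psi>)"
proof (rule group.subgroupI[OF O.FG_group])
  show "char_group_ring G Ok \<Psi> \<subseteq> carrier (FG Ok \<Psi>)" unfolding O.FG_simps by (rule RP_sub)
  have "(\<lambda>g. \<zero>\<^bsub>Ok\<^esub>) \<in> carrier G \<rightarrow> carrier Ok" by simp
  then show "char_group_ring G Ok \<Psi> \<noteq> {}" unfolding char_group_ring_def by blast
next
  fix x assume x: "x \<in> char_group_ring G Ok \<Psi>"
  then obtain a where a: "a \<in> carrier G \<rightarrow> carrier Ok" "x = (\<lambda>\<psi>\<in>\<Psi>. ce \<psi> a)" using RP_mem by blast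
  have xc: "x \<in> carrier (FG Ok \<Psi>)" using x RP_sub unfolding O.FG_simps by blast
  have "inv\<^bsub>FG Ok \<Psi>\<^esub> x = (\<lambda>\<psi>\<in>\<Psi>. \<ominus>\<^bsub>Ok\<^esub> x \<psi>)" by (rule O.FG_inv[OF xc])
  also have "\<dots> = (\<lambda>\<psi>\<in>\<Psi>. ce \<psi> (\<lambda>g. \<ominus>\<^bsub>Ok\<^esub> a g))"
    by (rule restrict_ext) (use a Psi ce_neg in auto)
  finally have "inv\<^bsub>FG Ok \<Psi>\<^esub> x = (\<lambda>\<psi>\<in>\<Psi>. ce \<psi> (\<lambda>g. \<ominus>\<^bsub>Ok\<^esub> a g))" .
  moreover have "(\<lambda>g. \<ominus>\<^bsub>Ok\<^esub> a g) \<in> carrier G \<rightarrow> carrier Ok" using a by auto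
  ultimately show "inv\<^bsub>FG Ok \<Psi>\<^esub> x \<in> char_group_ring G Ok \<Psi>" using RP_mem by blast
next
  fix x y assume x: "x \<in> char_group_ring G Ok \<Psi>" and y: "y \<in> char_group_ring G Ok \<Psi>"
  obtain a where a: "a \<in> carrier G \<rightarrow> carrier Ok" "x = (\<lambda>\<psi>\<in>\<Psi>. ce \<psi> a)" using x RP_mem by blast
  obtain b where b: "b \<in> carrier G \<rightarrow> carrier Ok" "y = (\<lambda>\<psi>\<in>\<Psi>. ce \<psi> b)" using y RP_mem by blast
  have "x \<otimes>\<^bsub>FG Ok \<Psi>\<^esub> y = (\<lambda>\<psi>\<in>\<Psi>. ce \<psi> (\<lambda>g. a g \<oplus>\<^bsub>Ok\<^esub> b g))"
    unfolding O.FG_simps cw_add_def a(2) b(2)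
    by (rule restrict_ext) (use a b Psi ce_add in auto)
  moreover have "(\<lambda>g. a g \<oplus>\<^bsub>Ok\<^esub> b g) \<in> carrier G \<rightarrow> carrier Ok" using a b by auto
  ultimately show "x \<otimes>\<^bsub>FG Ok \<Psi>\<^esub> y \<in> char_group_ring G Ok \<Psi>" using RP_mem by blast
qed

end

context charset begin

definition conv where
  "conv a b = (\<lambda>k. \<Oplus>\<^bsub>Ok\<^esub> g\<in>carrier G. a g \<otimes>\<^bsub>Ok\<^esub> b (inv\<^bsub>G\<^esub> g \<otimes>\<^bsub>G\<^esub> k))"

lemma conv_closed:
  assumes a: "a \<in> carrier G \<rightarrow> carrier Ok" and b: "b \<in> carrier G \<rightarrow> carrier Ok"
  shows "conv a b \<in> carrier G \<rightarrow> carrier Ok"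
proof -
  have ac: "\<And>g. g \<in> carrier G \<Longrightarrow> a g \<in> carrier Ok" "\<And>g. g \<in> carrier G \<Longrightarrow> b g \<in> carrier Ok"
    using a b by (simp_all add: Pi_iff)
  show ?thesis unfolding conv_def
    by (intro Pi_I O.finsum_closed) (use ac in auto)
qed

lemma ce_conv:
  assumes phi: "\<phi> \<in> characters G Ok" and a: "a \<in> carrier G \<rightarrow> carrier Ok" and b: "b \<in> carrier G \<rightarrow> carrier Ok"
  shows "ce \<phi> (conv a b) = ce \<phi> a \<otimes>\<^bsub>Ok\<^esub> ce \<phi> b"
proof -
  have ac: "\<And>g. g \<in> carrier G \<Longrightarrow> a g \<in> carrier Ok" and bc: "\<And>g. g \<in> carrier G \<Longrightarrow> b g \<in> carrier Ok"
    using a b by (simp_all add: Pi_iff)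
  have pc: "\<And>g. g \<in> carrier G \<Longrightarrow> \<phi> g \<in> carrier Ok" using chi_closed[OF phi] .
  define F where "F = (\<lambda>g k. (a g \<otimes>\<^bsub>Ok\<^esub> b (inv\<^bsub>G\<^esub> g \<otimes>\<^bsub>G\<^esub> k)) \<otimes>\<^bsub>Ok\<^esub> \<phi> k)"
  have Fc: "F g k \<in> carrier Ok" if "g \<in> carrier G" "k \<in> carrier G" for g k
    unfolding F_def using that ac bc pc by simp
  have "ce \<phi> (conv a b) = (\<Oplus>\<^bsub>Ok\<^esub> k\<in>carrier G. (\<Oplus>\<^bsub>Ok\<^esub> g\<in>carrier G. a g \<otimes>\<^bsub>Ok\<^esub> b (inv\<^bsub>G\<^esub> g \<otimes>\<^bsub>G\<^esub> k)) \<otimes>\<^bsub>Ok\<^esub> \<phi> k)"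
    unfolding char_eval_def conv_def by simp
  also have "\<dots> = (\<Oplus>\<^bsub>Ok\<^esub> k\<in>carrier G. \<Oplus>\<^bsub>Ok\<^esub> g\<in>carrier G. F g k)"
  proof (rule O.add.finprod_cong')
    show "(\<lambda>k. \<Oplus>\<^bsub>Ok\<^esub> g\<in>carrier G. F g k) \<in> carrier G \<rightarrow> carrier Ok"
      by (intro Pi_I O.finsum_closed) (use Fc in auto)
    fix k assume k: "k \<in> carrier G"
    show "(\<Oplus>\<^bsub>Ok\<^esub> g\<in>carrier G. a g \<otimes>\<^bsub>Ok\<^esub> b (inv\<^bsub>G\<^esub> g \<otimes>\<^bsub>G\<^esub> k)) \<otimes>\<^bsub>Ok\<^esub> \<phi> k = (\<Oplus>\<^bsub>Ok\<^esub> g\<in>carrier G. F g k)"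
      unfolding F_def by (rule O.finsum_ldistr) (use Gfin k pc ac bc in auto)
  qed simp
  also have "\<dots> = (\<Oplus>\<^bsub>Ok\<^esub> g\<in>carrier G. \<Oplus>\<^bsub>Ok\<^esub> k\<in>carrier G. F g k)"
    by (rule O.add.finprod_swap) (use Gfin Fc in auto)
  also have "\<dots> = (\<Oplus>\<^bsub>Ok\<^esub> g\<in>carrier G. (a g \<otimes>\<^bsub>Ok\<^esub> \<phi> g) \<otimes>\<^bsub>Ok\<^esub> ce \<phi> b)"
  proof (rule O.add.finprod_cong')
    show "(\<lambda>g. (a g \<otimes>\<^bsub>Ok\<^esub> \<phi> g) \<otimes>\<^bsub>Ok\<^esub> ce \<phi> b) \<in> carrier G \<rightarrow> carrier Ok"
      using ac pc ce_closed[OF phi b] by auto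
    fix g assume g: "g \<in> carrier G"
    have "(\<Oplus>\<^bsub>Ok\<^esub> k\<in>carrier G. F g k) = (\<Oplus>\<^bsub>Ok\<^esub> k\<in>(\<lambda>h. g \<otimes>\<^bsub>G\<^esub> h) ` carrier G. F g k)"
      using lmult_image[OF g] by simp
    also have "\<dots> = (\<Oplus>\<^bsub>Ok\<^esub> h\<in>carrier G. F g (g \<otimes>\<^bsub>G\<^esub> h))"
      by (rule O.finsum_reindex) (use lmult_image[OF g] Fc g lmult_inj[OF g] in auto)
    also have "\<dots> = (\<Oplus>\<^bsub>Ok\<^esub> h\<in>carrier G. (a g \<otimes>\<^bsub>Ok\<^esub> \<phi> g) \<otimes>\<^bsub>Ok\<^esub> (b h \<otimes>\<^bsub>Ok\<^esub> \<phi> h))"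
    proof (rule O.add.finprod_cong')
      show "(\<lambda>h. (a g \<otimes>\<^bsub>Ok\<^esub> \<phi> g) \<otimes>\<^bsub>Ok\<^esub> (b h \<otimes>\<^bsub>Ok\<^esub> \<phi> h)) \<in> carrier G \<rightarrow> carrier Ok"
        using ac bc pc g by auto
      fix h assume h: "h \<in> carrier G"
      have "inv\<^bsub>G\<^esub> g \<otimes>\<^bsub>G\<^esub> (g \<otimes>\<^bsub>G\<^esub> h) = h" using g h by (simp add: G.m_assoc[symmetric])
      then have "F g (g \<otimes>\<^bsub>G\<^esub> h) = (a g \<otimes>\<^bsub>Ok\<^esub> b h) \<otimes>\<^bsub>Ok\<^esub> (\<phi> g \<otimes>\<^bsub>Ok\<^esub> \<phi> h)"
        unfolding F_def using chi_mult[OF phi g h] by simp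
      also have "\<dots> = (a g \<otimes>\<^bsub>Ok\<^esub> \<phi> g) \<otimes>\<^bsub>Ok\<^esub> (b h \<otimes>\<^bsub>Ok\<^esub> \<phi> h)"
        using ac bc pc g h by (simp add: O.m_ac)
      finally show "F g (g \<otimes>\<^bsub>G\<^esub> h) = (a g \<otimes>\<^bsub>Ok\<^esub> \<phi> g) \<otimes>\<^bsub>Ok\<^esub> (b h \<otimes>\<^bsub>Ok\<^esub> \<phi> h)" .
    qed simp
    also have "\<dots> = (a g \<otimes>\<^bsub>Ok\<^esub> \<phi> g) \<otimes>\<^bsub>Ok\<^esub> ce \<phi> b"
      unfolding char_eval_def by (rule O.finsum_rdistr[symmetric]) (use Gfin ac bc pc g in auto)
    finally show "(\<Oplus>\<^bsub>Ok\<^esub> k\<in>carrier G. F g k) = (a g \<otimes>\<^bsub>Ok\<^esub> \<phi> g) \<otimes>\<^bsub>Ok\<^esub> ce \<phi> b" .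
  qed simp
  also have "\<dots> = ce \<phi> a \<otimes>\<^bsub>Ok\<^esub> ce \<phi> b"
    unfolding char_eval_def by (rule O.finsum_ldistr[symmetric]) (use Gfin ac pc ce_closed[OF phi b, unfolded char_eval_def] in auto)
  finally show ?thesis .
qed

lemma RP_mult:
  assumes x: "x \<in> char_group_ring G Ok \<Psi>" and w: "w \<in> char_group_ring G Ok \<Psi>"
  shows "cw_mult Ok \<Psi> x w \<in> char_group_ring G Ok \<Psi>"
proof -
  obtain a where a: "a \<in> carrier G \<rightarrow> carrier Ok" "x = (\<lambda>\<psi>\<in>\<Psi>. ce \<psi> a)" using x RP_mem by blast
  obtain b where b: "b \<in> carrier G \<rightarrow> carrier Ok" "w = (\<lambda>\<psi>\<in>\<Psi>. ce \<psi> b)" using w RP_mem by blast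
  have "cw_mult Ok \<Psi> x w = (\<lambda>\<psi>\<in>\<Psi>. ce \<psi> (conv a b))"
    unfolding cw_mult_def a(2) b(2)
    by (rule restrict_ext) (use a b Psi ce_conv in auto)
  then show ?thesis using RP_mem conv_closed[OF a(1) b(1)] by blast
qed

lemma Nc: "[N] \<cdot>\<^bsub>Ok\<^esub> \<one>\<^bsub>Ok\<^esub> \<in> carrier Ok"
  by simp

lemma RP_delta:
  assumes psi: "\<psi> \<in> \<Psi>"
  shows "(\<lambda>\<phi>\<in>\<Psi>. if \<psi> = \<phi> then [N] \<cdot>\<^bsub>Ok\<^esub> \<one>\<^bsub>Ok\<^esub> else \<zero>\<^bsub>Ok\<^esub>) \<in> char_group_ring G Ok \<Psi>"
proof -
  have pc: "\<psi> \<in> characters G Ok" using psi Psi by blast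
  have a: "(\<lambda>g. \<psi> (inv\<^bsub>G\<^esub> g)) \<in> carrier G \<rightarrow> carrier Ok" using chi_closed[OF pc] by simp
  have "(\<lambda>\<phi>\<in>\<Psi>. if \<psi> = \<phi> then [N] \<cdot>\<^bsub>Ok\<^esub> \<one>\<^bsub>Ok\<^esub> else \<zero>\<^bsub>Ok\<^esub>) = (\<lambda>\<phi>\<in>\<Psi>. ce \<phi> (\<lambda>g. \<psi> (inv\<^bsub>G\<^esub> g)))"
    unfolding char_eval_def by (rule restrict_ext) (use orthogonality pc Psi in auto)
  then show ?thesis using RP_mem a by blast
qed

lemma RP_scal:
  assumes f: "f \<in> PiE \<Psi> (\<lambda>_. carrier Ok)"
  shows "(\<lambda>\<phi>\<in>\<Psi>. [N] \<cdot>\<^bsub>Ok\<^esub> \<one>\<^bsub>Ok\<^esub> \<otimes>\<^bsub>Ok\<^esub> f \<phi>) \<in> char_group_ring G Ok \<Psi>"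
proof -
  have fc: "\<And>\<psi>. \<psi> \<in> \<Psi> \<Longrightarrow> f \<psi> \<in> carrier Ok" using f by (rule PiE_mem)
  have Pc: "\<And>\<psi>. \<psi> \<in> \<Psi> \<Longrightarrow> \<psi> \<in> characters G Ok" using Psi by blast
  have pc: "\<And>\<psi> g. \<psi> \<in> \<Psi> \<Longrightarrow> g \<in> carrier G \<Longrightarrow> \<psi> g \<in> carrier Ok" using chi_closed Pc by blast
  define a where "a = (\<lambda>g. \<Oplus>\<^bsub>Ok\<^esub> \<psi>\<in>\<Psi>. f \<psi> \<otimes>\<^bsub>Ok\<^esub> \<psi> (inv\<^bsub>G\<^esub> g))"
  have a: "a \<in> carrier G \<rightarrow> carrier Ok" unfolding a_def
    by (intro Pi_I O.finsum_closed) (use fc pc in auto)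
  have "ce \<phi> a = [N] \<cdot>\<^bsub>Ok\<^esub> \<one>\<^bsub>Ok\<^esub> \<otimes>\<^bsub>Ok\<^esub> f \<phi>" if phi: "\<phi> \<in> \<Psi>" for \<phi>
  proof -
    define F where "F = (\<lambda>g \<psi>. f \<psi> \<otimes>\<^bsub>Ok\<^esub> (\<psi> (inv\<^bsub>G\<^esub> g) \<otimes>\<^bsub>Ok\<^esub> \<phi> g))"
    have Fc: "F g \<psi> \<in> carrier Ok" if "g \<in> carrier G" "\<psi> \<in> \<Psi>" for g \<psi>
      unfolding F_def using that fc pc phi by simp
    have "ce \<phi> a = (\<Oplus>\<^bsub>Ok\<^esub> g\<in>carrier G. \<Oplus>\<^bsub>Ok\<^esub> \<psi>\<in>\<Psi>. F g \<psi>)"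
      unfolding char_eval_def
    proof (rule O.add.finprod_cong')
      show "(\<lambda>g. \<Oplus>\<^bsub>Ok\<^esub> \<psi>\<in>\<Psi>. F g \<psi>) \<in> carrier G \<rightarrow> carrier Ok"
        by (intro Pi_I O.finsum_closed) (use Fc in auto)
      fix g assume g: "g \<in> carrier G"
      have "a g \<otimes>\<^bsub>Ok\<^esub> \<phi> g = (\<Oplus>\<^bsub>Ok\<^esub> \<psi>\<in>\<Psi>. (f \<psi> \<otimes>\<^bsub>Ok\<^esub> \<psi> (inv\<^bsub>G\<^esub> g)) \<otimes>\<^bsub>Ok\<^esub> \<phi> g)"
        unfolding a_def by (rule O.finsum_ldistr) (use Psi_finite fc pc phi g in auto)
      also have "\<dots> = (\<Oplus>\<^bsub>Ok\<^esub> \<psi>\<in>\<Psi>. F g \<psi>)"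
        unfolding F_def by (rule O.add.finprod_cong') (use fc pc phi g O.m_assoc in auto)
      finally show "a g \<otimes>\<^bsub>Ok\<^esub> \<phi> g = (\<Oplus>\<^bsub>Ok\<^esub> \<psi>\<in>\<Psi>. F g \<psi>)" .
    qed simp
    also have "\<dots> = (\<Oplus>\<^bsub>Ok\<^esub> \<psi>\<in>\<Psi>. \<Oplus>\<^bsub>Ok\<^esub> g\<in>carrier G. F g \<psi>)"
      by (rule O.add.finprod_swap) (use Gfin Psi_finite Fc in auto)
    also have "\<dots> = (\<Oplus>\<^bsub>Ok\<^esub> \<psi>\<in>\<Psi>. if \<phi> = \<psi> then f \<psi> \<otimes>\<^bsub>Ok\<^esub> [N] \<cdot>\<^bsub>Ok\<^esub> \<one>\<^bsub>Ok\<^esub> else \<zero>\<^bsub>Ok\<^esub>)"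
    proof (rule O.add.finprod_cong')
      show "(\<lambda>\<psi>. if \<phi> = \<psi> then f \<psi> \<otimes>\<^bsub>Ok\<^esub> [N] \<cdot>\<^bsub>Ok\<^esub> \<one>\<^bsub>Ok\<^esub> else \<zero>\<^bsub>Ok\<^esub>) \<in> \<Psi> \<rightarrow> carrier Ok"
        using fc by auto
      fix \<psi> assume psi: "\<psi> \<in> \<Psi>"
      have "(\<Oplus>\<^bsub>Ok\<^esub> g\<in>carrier G. F g \<psi>) = f \<psi> \<otimes>\<^bsub>Ok\<^esub> (\<Oplus>\<^bsub>Ok\<^esub> g\<in>carrier G. \<psi> (inv\<^bsub>G\<^esub> g) \<otimes>\<^bsub>Ok\<^esub> \<phi> g)"
        unfolding F_def by (rule O.finsum_rdistr[symmetric]) (use Gfin fc pc phi psi in auto)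
      also have "\<dots> = f \<psi> \<otimes>\<^bsub>Ok\<^esub> (if \<psi> = \<phi> then [N] \<cdot>\<^bsub>Ok\<^esub> \<one>\<^bsub>Ok\<^esub> else \<zero>\<^bsub>Ok\<^esub>)"
        using orthogonality[OF Pc[OF psi] Pc[OF phi]] by simp
      also have "\<dots> = (if \<phi> = \<psi> then f \<psi> \<otimes>\<^bsub>Ok\<^esub> [N] \<cdot>\<^bsub>Ok\<^esub> \<one>\<^bsub>Ok\<^esub> else \<zero>\<^bsub>Ok\<^esub>)"
        using fc[OF psi] by auto
      finally show "(\<Oplus>\<^bsub>Ok\<^esub> g\<in>carrier G. F g \<psi>) = (if \<phi> = \<psi> then f \<psi> \<otimes>\<^bsub>Ok\<^esub> [N] \<cdot>\<^bsub>Ok\<^esub> \<one>\<^bsub>Ok\<^esub> else \<zero>\<^bsub>Ok\<^esub>)" .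
    qed simp
    also have "\<dots> = f \<phi> \<otimes>\<^bsub>Ok\<^esub> [N] \<cdot>\<^bsub>Ok\<^esub> \<one>\<^bsub>Ok\<^esub>"
      by (rule O.finsum_singleton) (use phi Psi_finite fc in auto)
    also have "\<dots> = [N] \<cdot>\<^bsub>Ok\<^esub> \<one>\<^bsub>Ok\<^esub> \<otimes>\<^bsub>Ok\<^esub> f \<phi>" using fc[OF phi] by (simp add: O.m_comm)
    finally show ?thesis .
  qed
  then have "(\<lambda>\<phi>\<in>\<Psi>. [N] \<cdot>\<^bsub>Ok\<^esub> \<one>\<^bsub>Ok\<^esub> \<otimes>\<^bsub>Ok\<^esub> f \<phi>) = (\<lambda>\<phi>\<in>\<Psi>. ce \<phi> a)"
    by (intro restrict_ext) simp
  then show ?thesis using RP_mem a by blast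
qed

end

context charset begin

lemma x_nonzero:
  assumes nzd: "non_zerodivisor Ok \<Psi> (char_group_ring G Ok \<Psi>) x"
    and NZ: "[N] \<cdot>\<^bsub>Ok\<^esub> \<one>\<^bsub>Ok\<^esub> \<noteq> \<zero>\<^bsub>Ok\<^esub>"
    and psi: "\<psi> \<in> \<Psi>"
  shows "x \<psi> \<noteq> \<zero>\<^bsub>Ok\<^esub>"
proof
  assume x0: "x \<psi> = \<zero>\<^bsub>Ok\<^esub>"
  let ?y = "(\<lambda>\<phi>\<in>\<Psi>. if \<psi> = \<phi> then [N] \<cdot>\<^bsub>Ok\<^esub> \<one>\<^bsub>Ok\<^esub> else \<zero>\<^bsub>Ok\<^esub>)"
  have xR: "x \<in> char_group_ring G Ok \<Psi>" using nzd unfolding non_zerodivisor_def by blast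
  have xc: "\<And>\<phi>. \<phi> \<in> \<Psi> \<Longrightarrow> x \<phi> \<in> carrier Ok" using xR RP_sub PiE_mem by blast
  have "cw_mult Ok \<Psi> x ?y = cw_zero Ok \<Psi>"
    unfolding cw_mult_def cw_zero_def
  proof (rule restrict_ext)
    fix \<phi> assume phi: "\<phi> \<in> \<Psi>"
    show "x \<phi> \<otimes>\<^bsub>Ok\<^esub> ?y \<phi> = \<zero>\<^bsub>Ok\<^esub>"
    proof (cases "\<psi> = \<phi>")
      case True then show ?thesis using x0 phi by simp
    next
      case False then show ?thesis using xc[OF phi] phi by simp
    qed
  qed
  then have "?y = cw_zero Ok \<Psi>" using nzd RP_delta[OF psi] unfolding non_zerodivisor_def by blast
  then have "?y \<psi> = cw_zero Ok \<Psi> \<psi>" by simp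
  then show False using NZ psi unfolding cw_zero_def by simp
qed

lemma quot_eq:
  assumes xR: "x \<in> char_group_ring G Ok \<Psi>"
  shows "quot_principal Ok \<Psi> (char_group_ring G Ok \<Psi>) x
       = cosets_in (FG Ok \<Psi>) (cw_mult Ok \<Psi> x ` char_group_ring G Ok \<Psi>) (char_group_ring G Ok \<Psi>)"
  unfolding quot_principal_def cosets_in_def
proof (rule image_cong[OF refl])
  fix y assume y: "y \<in> char_group_ring G Ok \<Psi>"
  have xP: "x \<in> PiE \<Psi> (\<lambda>_. carrier Ok)" using xR RP_sub by blast
  have yP: "y \<in> PiE \<Psi> (\<lambda>_. carrier Ok)" using y RP_sub by blast
  have "{cw_add Ok \<Psi> y (cw_mult Ok \<Psi> x w) |w. w \<in> char_group_ring G Ok \<Psi>}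
      = (\<Union>h\<in>cw_mult Ok \<Psi> x ` char_group_ring G Ok \<Psi>. {cw_add Ok \<Psi> h y})"
  proof -
    have e: "cw_add Ok \<Psi> y (cw_mult Ok \<Psi> x w) = cw_add Ok \<Psi> (cw_mult Ok \<Psi> x w) y"
      if "w \<in> char_group_ring G Ok \<Psi>" for w
    proof -
      have "w \<in> PiE \<Psi> (\<lambda>_. carrier Ok)" using that RP_sub by (rule subsetD[rotated])
      then show ?thesis by (rule O.FG_comm[OF yP O.cw_mult_closed[OF xP]])
    qed
    have "{cw_add Ok \<Psi> y (cw_mult Ok \<Psi> x w) |w. w \<in> char_group_ring G Ok \<Psi>}
        = (\<lambda>w. cw_add Ok \<Psi> y (cw_mult Ok \<Psi> x w)) ` char_group_ring G Ok \<Psi>"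
      by (simp only: Setcompr_eq_image)
    also have "\<dots> = (\<lambda>w. cw_add Ok \<Psi> (cw_mult Ok \<Psi> x w) y) ` char_group_ring G Ok \<Psi>"
      by (rule image_cong[OF refl e])
    also have "\<dots> = (\<lambda>h. cw_add Ok \<Psi> h y) ` (cw_mult Ok \<Psi> x ` char_group_ring G Ok \<Psi>)"
      by (simp only: image_image)
    also have "\<dots> = (\<Union>h\<in>cw_mult Ok \<Psi> x ` char_group_ring G Ok \<Psi>. {cw_add Ok \<Psi> h y})"
      by (simp only: UNION_singleton_eq_range)
    finally show ?thesis .
  qed
  then show "{cw_add Ok \<Psi> y (cw_mult Ok \<Psi> x w) |w. w \<in> char_group_ring G Ok \<Psi>}
      = cw_mult Ok \<Psi> x ` char_group_ring G Ok \<Psi> #>\<^bsub>FG Ok \<Psi>\<^esub> y"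
    unfolding r_coset_def O.FG_simps by simp
qed

lemma main_charset:
  assumes xR: "x \<in> char_group_ring G Ok \<Psi>"
    and nzd: "non_zerodivisor Ok \<Psi> (char_group_ring G Ok \<Psi>) x"
    and NZ: "[N] \<cdot>\<^bsub>Ok\<^esub> \<one>\<^bsub>Ok\<^esub> \<noteq> \<zero>\<^bsub>Ok\<^esub>"
    and d1: "d1 \<in> carrier Ok" "d1 \<noteq> \<zero>\<^bsub>Ok\<^esub>" "finite (O.Oquot d1)"
    and t: "t \<in> carrier Ok" "d1 = [N] \<cdot>\<^bsub>Ok\<^esub> \<one>\<^bsub>Ok\<^esub> \<otimes>\<^bsub>Ok\<^esub> t"
  shows "card (quot_principal Ok \<Psi> (char_group_ring G Ok \<Psi>) x)
       = card (carrier (Ok Quot (PIdl\<^bsub>Ok\<^esub> (\<Otimes>\<^bsub>Ok\<^esub> \<psi>\<in>\<Psi>. x \<psi>))))"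
proof -
  let ?R = "char_group_ring G Ok \<Psi>"
  have xP: "x \<in> PiE \<Psi> (\<lambda>_. carrier Ok)" using RP_sub xR by (rule subsetD)
  have xc: "\<And>\<phi>. \<phi> \<in> \<Psi> \<Longrightarrow> x \<phi> \<in> carrier Ok" using xP by (rule PiE_mem)
  have xnz: "\<And>\<psi>. \<psi> \<in> \<Psi> \<Longrightarrow> x \<psi> \<noteq> \<zero>\<^bsub>Ok\<^esub>" by (rule x_nonzero[OF nzd NZ])
  define d where "d = (\<lambda>\<psi>\<in>\<Psi>. d1)"
  have dP: "d \<in> PiE \<Psi> (\<lambda>_. carrier Ok)" unfolding d_def using d1(1) by simp
  have dR: "cw_mult Ok \<Psi> d ` carrier (FG Ok \<Psi>) \<subseteq> ?R"
  proof
    fix z assume "z \<in> cw_mult Ok \<Psi> d ` carrier (FG Ok \<Psi>)"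
    then obtain f where f: "f \<in> PiE \<Psi> (\<lambda>_. carrier Ok)" "z = cw_mult Ok \<Psi> d f"
      unfolding O.FG_simps by (rule imageE) simp
    have fc: "\<And>\<phi>. \<phi> \<in> \<Psi> \<Longrightarrow> f \<phi> \<in> carrier Ok" using f(1) by (rule PiE_mem)
    define f' where "f' = (\<lambda>\<phi>\<in>\<Psi>. t \<otimes>\<^bsub>Ok\<^esub> f \<phi>)"
    have f'P: "f' \<in> PiE \<Psi> (\<lambda>_. carrier Ok)" unfolding f'_def
      by (rule restrict_PiE_iff[THEN iffD2]) (use t fc in simp)
    have "z = (\<lambda>\<phi>\<in>\<Psi>. [N] \<cdot>\<^bsub>Ok\<^esub> \<one>\<^bsub>Ok\<^esub> \<otimes>\<^bsub>Ok\<^esub> f' \<phi>)"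
      unfolding f(2) cw_mult_def d_def f'_def
      by (rule restrict_ext) (use t fc in \<open>simp add: O.m_assoc\<close>)
    then show "z \<in> ?R" using RP_scal[OF f'P] by simp
  qed
  have "card (quot_principal Ok \<Psi> ?R x) = card (cosets_in (FG Ok \<Psi>) (cw_mult Ok \<Psi> x ` ?R) ?R)"
    using quot_eq[OF xR] by simp
  also have "\<dots> = (\<Prod>\<psi>\<in>\<Psi>. card (O.Oquot (x \<psi>)))"
  proof (rule O.main_index[OF Psi_finite RP_subgroup xP xnz _ dP _ dR])
    show "cw_mult Ok \<Psi> x ` ?R \<subseteq> ?R" using RP_mult[OF xR] by blast
    show "\<And>i. i \<in> \<Psi> \<Longrightarrow> d i \<noteq> \<zero>\<^bsub>Ok\<^esub>" unfolding d_def using d1 by simp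
    show "\<And>i. i \<in> \<Psi> \<Longrightarrow> finite (O.Oquot (d i))" unfolding d_def using d1 by simp
  qed
  also have "\<dots> = card (O.Oquot (\<Otimes>\<^bsub>Ok\<^esub> \<psi>\<in>\<Psi>. x \<psi>))"
    by (rule O.Oquot_prod[OF Psi_finite xc xnz])
  finally show ?thesis unfolding O.Oquot_def .
qed

end

definition emb :: "int \<Rightarrow> int \<Rightarrow> nat \<Rightarrow> int" where
  "emb p m = (\<lambda>n. m mod p ^ n)"

lemma Zp_carrier_iff: "f \<in> carrier (Zp p) \<longleftrightarrow> (\<forall>n. 0 \<le> f n \<and> f n < p ^ n) \<and> (\<forall>n. f (Suc n) mod p ^ n = f n)"
  by (simp add: Zp_def)

lemma Zp_ops: "mult (Zp p) f g = (\<lambda>n. (f n * g n) mod p ^ n)" "add (Zp p) f g = (\<lambda>n. (f n + g n) mod p ^ n)"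
  "one (Zp p) = (\<lambda>n. 1 mod p ^ n)" "zero (Zp p) = (\<lambda>n. 0)"
  by (simp_all add: Zp_def)

lemma emb_carrier: assumes p: "p > 1" shows "emb p m \<in> carrier (Zp p)"
proof -
  have q: "p ^ n > 0" for n using p by simp
  have "(m mod p ^ Suc n) mod p ^ n = m mod p ^ n" for n
    by (rule mod_mod_cancel) (rule le_imp_power_dvd, simp)
  then show ?thesis unfolding Zp_carrier_iff emb_def using q by simp
qed

lemma emb_add: "add (Zp p) (emb p a) (emb p b) = emb p (a + b)"
  unfolding Zp_ops emb_def by (simp add: mod_add_eq)

lemma emb_mult: "mult (Zp p) (emb p a) (emb p b) = emb p (a * b)"
  unfolding Zp_ops emb_def by (simp add: mod_mult_eq)

lemma emb_one: "one (Zp p) = emb p 1"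
  unfolding Zp_ops emb_def by simp

lemma emb_zero: "zero (Zp p) = emb p 0"
  unfolding Zp_ops emb_def by simp

lemma Zp_compat:
  assumes c: "c \<in> carrier (Zp p)" and p: "p > 1"
  shows "c (n + k) mod p ^ n = c n"
proof (induction k)
  case 0
  have "0 \<le> c n" "c n < p ^ n" using c unfolding Zp_carrier_iff by auto
  then show ?case by simp
next
  case (Suc k)
  have "c (n + Suc k) mod p ^ n = (c (Suc (n + k)) mod p ^ (n + k)) mod p ^ n"
    by (simp add: mod_mod_cancel le_imp_power_dvd)
  also have "c (Suc (n + k)) mod p ^ (n + k) = c (n + k)" using c unfolding Zp_carrier_iff by blast
  finally show ?case using Suc.IH by simp
qed

lemma Zp_decomp:
  assumes p: "p > 1" and c: "c \<in> carrier (Zp p)"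
  shows "\<exists>e\<in>carrier (Zp p). c = add (Zp p) (emb p (c v)) (mult (Zp p) (emb p (p ^ v)) e)"
proof -
  define D where "D = (\<lambda>n. c (n + v) div p ^ v)"
  define e where "e = (\<lambda>n. D n mod p ^ n)"
  have q: "\<And>n. p ^ n > 0" using p by simp
  have cD: "c (n + v) = p ^ v * D n + c v" for n
  proof -
    have "c (v + n) mod p ^ v = c v" by (rule Zp_compat[OF c p])
    then show ?thesis unfolding D_def using minus_mod_eq_mult_div[of "c (n + v)" "p ^ v"]
      by (simp add: add.commute)
  qed
  have "e \<in> carrier (Zp p)"
    unfolding Zp_carrier_iff
  proof (intro conjI allI)
    fix n
    show "0 \<le> e n" "e n < p ^ n" unfolding e_def using q by simp_all
    have "c (Suc (n + v)) mod p ^ (n + v) = c (n + v)" using c unfolding Zp_carrier_iff by blast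
    then have "c (Suc (n + v)) mod p ^ (n + v) = c (n + v) mod p ^ (n + v)"
      using Zp_compat[OF c p, of "n + v" 0] by simp
    then have "p ^ (n + v) dvd c (Suc (n + v)) - c (n + v)" by (simp add: mod_eq_dvd_iff)
    moreover have "c (Suc (n + v)) - c (n + v) = p ^ v * (D (Suc n) - D n)"
      using cD[of "Suc n"] cD[of n] by (simp add: algebra_simps)
    ultimately have "p ^ v * p ^ n dvd p ^ v * (D (Suc n) - D n)" by (simp add: power_add mult.commute)
    then have "p ^ n dvd D (Suc n) - D n" using q[of v] p by auto
    then have "D (Suc n) mod p ^ n = D n mod p ^ n" by (simp add: mod_eq_dvd_iff)
    then show "e (Suc n) mod p ^ n = e n" unfolding e_def
      by (simp add: mod_mod_cancel le_imp_power_dvd)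
  qed
  moreover have "c = add (Zp p) (emb p (c v)) (mult (Zp p) (emb p (p ^ v)) e)"
  proof
    fix n
    have "add (Zp p) (emb p (c v)) (mult (Zp p) (emb p (p ^ v)) e) n
        = (c v mod p ^ n + (p ^ v mod p ^ n * (D n mod p ^ n)) mod p ^ n) mod p ^ n"
      unfolding Zp_ops emb_def e_def by simp
    also have "\<dots> = (c v + p ^ v * D n) mod p ^ n"
      by (simp add: mod_add_eq mod_mult_eq)
    also have "\<dots> = c (n + v) mod p ^ n" using cD[of n] by (simp add: add.commute)
    also have "\<dots> = c n" by (rule Zp_compat[OF c p])
    finally show "c n = add (Zp p) (emb p (c v)) (mult (Zp p) (emb p (p ^ v)) e) n" by simp
  qed
  ultimately show ?thesis by blast
qed

lemma inv_mod_unique: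
  fixes u s s' q :: int
  assumes "(u * s) mod q = 1 mod q" "(u * s') mod q = 1 mod q"
  shows "s mod q = s' mod q"
proof -
  have "s mod q = (s * ((u * s') mod q)) mod q" using assms(2) by (simp add: mod_mult_right_eq)
  also have "\<dots> = (s' * ((u * s) mod q)) mod q"
    by (simp add: mod_mult_right_eq algebra_simps)
  also have "\<dots> = s' mod q" using assms(1) by (simp add: mod_mult_right_eq)
  finally show ?thesis .
qed

lemma Zp_unit:
  assumes p: "prime p" and u: "\<not> p dvd u"
  shows "\<exists>e\<in>carrier (Zp p). mult (Zp p) (emb p u) e = one (Zp p)"
proof -
  have p1: "p > 1" using p prime_gt_1_int by blast
  have q: "\<And>n. p ^ n > 0" using p1 by simp
  have ex: "\<exists>s. 0 \<le> s \<and> s < p ^ n \<and> (u * s) mod p ^ n = 1 mod p ^ n" for n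
  proof -
    have "coprime p u" by (rule prime_imp_coprime[OF p u])
    then have "coprime u (p ^ n)" by (simp add: coprime_commute)
    then have g: "gcd u (p ^ n) = 1" by simp
    obtain s t where "s * u + t * p ^ n = gcd u (p ^ n)" using bezout_int by blast
    then have st: "u * s = 1 - t * p ^ n" using g by (simp add: algebra_simps)
    have "(u * (s mod p ^ n)) mod p ^ n = (u * s) mod p ^ n" by (simp add: mod_mult_right_eq)
    also have "\<dots> = 1 mod p ^ n" unfolding st by (simp add: mod_diff_eq[symmetric])
    finally show ?thesis using q[of n] by (intro exI[of _ "s mod p ^ n"]) simp
  qed
  define e where "e = (\<lambda>n. SOME s. 0 \<le> s \<and> s < p ^ n \<and> (u * s) mod p ^ n = 1 mod p ^ n)"
  have eP: "0 \<le> e n \<and> e n < p ^ n \<and> (u * e n) mod p ^ n = 1 mod p ^ n" for n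
    unfolding e_def by (rule someI_ex[OF ex])
  have "e \<in> carrier (Zp p)"
    unfolding Zp_carrier_iff
  proof (intro conjI allI)
    fix n
    show "0 \<le> e n" "e n < p ^ n" using eP by auto
    have dv: "p ^ n dvd p ^ Suc n" by (rule le_imp_power_dvd) simp
    have "(u * e (Suc n)) mod p ^ n = ((u * e (Suc n)) mod p ^ Suc n) mod p ^ n"
      by (rule mod_mod_cancel[OF dv, symmetric])
    also have "\<dots> = (1 mod p ^ Suc n) mod p ^ n" using eP[of "Suc n"] by simp
    also have "\<dots> = 1 mod p ^ n" by (rule mod_mod_cancel[OF dv])
    finally have "e (Suc n) mod p ^ n = e n mod p ^ n"
      using inv_mod_unique eP[of n] by blast
    then show "e (Suc n) mod p ^ n = e n" using eP[of n] by simp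
  qed
  moreover have "mult (Zp p) (emb p u) e = one (Zp p)"
  proof
    fix n
    show "mult (Zp p) (emb p u) e n = one (Zp p) n"
      unfolding Zp_ops emb_def using eP[of n] by (simp add: mod_mult_left_eq)
  qed
  ultimately show ?thesis by blast
qed

lemma pv_decomp:
  fixes p :: int
  assumes p: "p > 1"
  shows "0 < N \<Longrightarrow> \<exists>v u. N = p ^ v * u \<and> \<not> p dvd u \<and> u > 0"
proof (induction "nat N" arbitrary: N rule: less_induct)
  case less
  show ?case
  proof (cases "p dvd N")
    case False then show ?thesis using less.prems by (intro exI[of _ 0] exI[of _ N]) auto
  next
    case True
    then obtain M where M: "N = p * M" by blast
    have Mpos: "M > 0" using M less.prems p by (simp add: zero_less_mult_iff)
    have "M < N" using M Mpos p by simp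
    then have "nat M < nat N" using Mpos by simp
    then obtain v u where "M = p ^ v * u" "\<not> p dvd u" "u > 0" using less.hyps Mpos by blast
    then show ?thesis using M by (intro exI[of _ "Suc v"] exI[of _ u]) simp
  qed
qed

lemma Zp_mult_closed:
  assumes p: "p > 1" and f: "f \<in> carrier (Zp p)" and g: "g \<in> carrier (Zp p)"
  shows "mult (Zp p) f g \<in> carrier (Zp p)"
  unfolding Zp_carrier_iff Zp_ops
proof (intro conjI allI)
  fix n
  have q: "p ^ n > 0" using p by simp
  show "0 \<le> (f n * g n) mod p ^ n" "(f n * g n) mod p ^ n < p ^ n" using q by simp_all
  have dv: "p ^ n dvd p ^ Suc n" by (rule le_imp_power_dvd) simp
  have "(f (Suc n) * g (Suc n)) mod p ^ Suc n mod p ^ n = (f (Suc n) * g (Suc n)) mod p ^ n"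
    by (rule mod_mod_cancel[OF dv])
  also have "\<dots> = ((f (Suc n) mod p ^ n) * (g (Suc n) mod p ^ n)) mod p ^ n"
    by (simp add: mod_mult_eq)
  also have "\<dots> = (f n * g n) mod p ^ n" using f g unfolding Zp_carrier_iff by simp
  finally show "(f (Suc n) * g (Suc n)) mod p ^ Suc n mod p ^ n = (f n * g n) mod p ^ n" .
qed

locale zpext = O: domain Ok for Ok :: "('a, 'b) ring_scheme" +
  fixes p :: int and iota :: "(nat \<Rightarrow> int) \<Rightarrow> 'a"
  assumes p: "prime p" and hom: "iota \<in> ring_hom (Zp p) Ok" and inj: "inj_on iota (carrier (Zp p))"
    and fg: "\<exists>B. finite B \<and> B \<subseteq> carrier Ok \<and>
        (\<forall>a \<in> carrier Ok. \<exists>c. c \<in> (B \<rightarrow> carrier (Zp p)) \<and>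
            a = (\<Oplus>\<^bsub>Ok\<^esub> b\<in>B. iota (c b) \<otimes>\<^bsub>Ok\<^esub> b))"
begin

lemma p1: "p > 1" using p prime_gt_1_int by blast

lemma iota_closed: "f \<in> carrier (Zp p) \<Longrightarrow> iota f \<in> carrier Ok"
  by (rule ring_hom_closed[OF hom])

lemma iota_zero: "iota (zero (Zp p)) = \<zero>\<^bsub>Ok\<^esub>"
proof -
  let ?z = "zero (Zp p)"
  have zc: "?z \<in> carrier (Zp p)" using emb_zero emb_carrier[OF p1] by metis
  have "add (Zp p) ?z ?z = ?z" unfolding Zp_ops by simp
  then have "iota ?z \<oplus>\<^bsub>Ok\<^esub> iota ?z = iota ?z" using ring_hom_add[OF hom zc zc] by simp
  then show ?thesis using O.add.r_cancel_one[OF iota_closed[OF zc] iota_closed[OF zc]] by simp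
qed

lemma iota_emb_nat: "iota (emb p (int m)) = [m] \<cdot>\<^bsub>Ok\<^esub> \<one>\<^bsub>Ok\<^esub>"
proof (induction m)
  case 0
  then show ?case using iota_zero emb_zero by (simp add: add_pow_def)
next
  case (Suc m)
  have "emb p (int (Suc m)) = add (Zp p) (emb p (int m)) (one (Zp p))"
    using emb_add[of p "int m" 1] emb_one[of p] by (simp add: add.commute)
  then have "iota (emb p (int (Suc m))) = iota (emb p (int m)) \<oplus>\<^bsub>Ok\<^esub> iota (one (Zp p))"
    using ring_hom_add[OF hom emb_carrier[OF p1] emb_carrier[OF p1]] emb_one[of p] by simp
  also have "\<dots> = [m] \<cdot>\<^bsub>Ok\<^esub> \<one>\<^bsub>Ok\<^esub> \<oplus>\<^bsub>Ok\<^esub> \<one>\<^bsub>Ok\<^esub>" using Suc.IH ring_hom_one[OF hom] by simp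
  also have "\<dots> = [Suc m] \<cdot>\<^bsub>Ok\<^esub> \<one>\<^bsub>Ok\<^esub>" by (simp add: add_pow_def)
  finally show ?case .
qed

lemma iota_emb_mult: "iota (emb p (a * b)) = iota (emb p a) \<otimes>\<^bsub>Ok\<^esub> iota (emb p b)"
  using ring_hom_mult[OF hom emb_carrier[OF p1, of a] emb_carrier[OF p1, of b]] emb_mult[of p a b] by simp

lemma emb_nonzero:
  assumes "m \<noteq> 0" "0 \<le> m" "m < p ^ n"
  shows "iota (emb p m) \<noteq> \<zero>\<^bsub>Ok\<^esub>"
proof
  assume "iota (emb p m) = \<zero>\<^bsub>Ok\<^esub>"
  then have "iota (emb p m) = iota (emb p 0)" using iota_zero emb_zero by metis
  then have "emb p m = emb p 0" using inj emb_carrier[OF p1] unfolding inj_on_def by blast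
  then have "emb p m n = emb p 0 n" by simp
  then show False using assms unfolding emb_def by simp
qed

lemma N_nonzero: fixes N :: nat shows "N > 0 \<Longrightarrow> [N] \<cdot>\<^bsub>Ok\<^esub> \<one>\<^bsub>Ok\<^esub> \<noteq> \<zero>\<^bsub>Ok\<^esub>"
proof -
  assume N: "N > 0"
  have "N < 2 ^ N" by (rule less_exp)
  then have "int N < int (2 ^ N)" by (simp only: of_nat_less_iff)
  then have "int N < 2 ^ N" by simp
  also have "(2::int) ^ N \<le> p ^ N" using p1 by (intro power_mono) auto
  finally have "iota (emb p (int N)) \<noteq> \<zero>\<^bsub>Ok\<^esub>" using N by (intro emb_nonzero[of _ N]) auto
  then show ?thesis using iota_emb_nat by simp
qed

end

context zpext begin

lemma finite_Oquot_pv: "finite (O.Oquot (iota (emb p (p ^ v))))"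
proof -
  obtain B where B: "finite B" "B \<subseteq> carrier Ok"
    and span: "\<And>a. a \<in> carrier Ok \<Longrightarrow> \<exists>c. c \<in> (B \<rightarrow> carrier (Zp p)) \<and> a = (\<Oplus>\<^bsub>Ok\<^esub> b\<in>B. iota (c b) \<otimes>\<^bsub>Ok\<^esub> b)"
    using fg by blast
  define d1 where "d1 = iota (emb p (p ^ v))"
  have d1c: "d1 \<in> carrier Ok" unfolding d1_def by (rule iota_closed[OF emb_carrier[OF p1]])
  define S where "S = PiE B (\<lambda>_. {0..<p ^ v})"
  have Sfin: "finite S" unfolding S_def using B(1) by (intro finite_PiE) auto
  define r where "r = (\<lambda>k. \<Oplus>\<^bsub>Ok\<^esub> b\<in>B. iota (emb p (k b)) \<otimes>\<^bsub>Ok\<^esub> b)"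
  have Bc: "\<And>b. b \<in> B \<Longrightarrow> b \<in> carrier Ok" using B(2) by blast
  have embc: "\<And>m. iota (emb p m) \<in> carrier Ok" by (rule iota_closed[OF emb_carrier[OF p1]])
  have rc: "r k \<in> carrier Ok" for k unfolding r_def by (intro O.finsum_closed Pi_I) (use embc Bc in auto)
  have "O.Oquot d1 \<subseteq> (\<lambda>k. PIdl\<^bsub>Ok\<^esub> d1 +>\<^bsub>Ok\<^esub> r k) ` S"
  proof
    fix Q assume "Q \<in> O.Oquot d1"
    then obtain a where a: "a \<in> carrier Ok" "Q = PIdl\<^bsub>Ok\<^esub> d1 +>\<^bsub>Ok\<^esub> a"
      unfolding O.Oquot_eq cosets_in_def a_r_coset_def by blast
    obtain c where c: "c \<in> B \<rightarrow> carrier (Zp p)" "a = (\<Oplus>\<^bsub>Ok\<^esub> b\<in>B. iota (c b) \<otimes>\<^bsub>Ok\<^esub> b)"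
      using span[OF a(1)] by blast
    have cc: "\<And>b. b \<in> B \<Longrightarrow> c b \<in> carrier (Zp p)" using c(1) by blast
    define E where "E = (\<lambda>b. SOME e. e \<in> carrier (Zp p) \<and>
        c b = add (Zp p) (emb p (c b v)) (mult (Zp p) (emb p (p ^ v)) e))"
    have E: "E b \<in> carrier (Zp p) \<and> c b = add (Zp p) (emb p (c b v)) (mult (Zp p) (emb p (p ^ v)) (E b))"
      if "b \<in> B" for b
    proof -
      have "\<exists>e. e \<in> carrier (Zp p) \<and> c b = add (Zp p) (emb p (c b v)) (mult (Zp p) (emb p (p ^ v)) e)"
        using Zp_decomp[OF p1 cc[OF that], of v] by blast
      then show ?thesis unfolding E_def by (rule someI_ex)
    qed
    have Ec: "\<And>b. b \<in> B \<Longrightarrow> iota (E b) \<in> carrier Ok" using E iota_closed by blast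
    define k where "k = (\<lambda>b\<in>B. c b v)"
    have kS: "k \<in> S" unfolding S_def k_def
    proof (rule restrict_PiE_iff[THEN iffD2], intro ballI)
      fix b assume "b \<in> B"
      then have "0 \<le> c b v \<and> c b v < p ^ v" using cc unfolding Zp_carrier_iff by blast
      then show "c b v \<in> {0..<p ^ v}" by simp
    qed
    have ic: "iota (c b) = iota (emb p (k b)) \<oplus>\<^bsub>Ok\<^esub> d1 \<otimes>\<^bsub>Ok\<^esub> iota (E b)" if b: "b \<in> B" for b
    proof -
      have mc: "mult (Zp p) (emb p (p ^ v)) (E b) \<in> carrier (Zp p)"
        using Zp_mult_closed[OF p1 emb_carrier[OF p1] conjunct1[OF E[OF b]]] .
      have "iota (c b) = iota (add (Zp p) (emb p (c b v)) (mult (Zp p) (emb p (p ^ v)) (E b)))"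
        using E[OF b] by metis
      also have "\<dots> = iota (emb p (c b v)) \<oplus>\<^bsub>Ok\<^esub> iota (mult (Zp p) (emb p (p ^ v)) (E b))"
        by (rule ring_hom_add[OF hom emb_carrier[OF p1] mc])
      also have "iota (mult (Zp p) (emb p (p ^ v)) (E b)) = d1 \<otimes>\<^bsub>Ok\<^esub> iota (E b)"
        unfolding d1_def by (rule ring_hom_mult[OF hom emb_carrier[OF p1] conjunct1[OF E[OF b]]])
      finally show ?thesis unfolding k_def using b by simp
    qed
    define y where "y = (\<Oplus>\<^bsub>Ok\<^esub> b\<in>B. iota (E b) \<otimes>\<^bsub>Ok\<^esub> b)"
    have yc: "y \<in> carrier Ok" unfolding y_def by (intro O.finsum_closed Pi_I) (use Ec Bc in auto)
    have "a = (\<Oplus>\<^bsub>Ok\<^esub> b\<in>B. iota (emb p (k b)) \<otimes>\<^bsub>Ok\<^esub> b \<oplus>\<^bsub>Ok\<^esub> d1 \<otimes>\<^bsub>Ok\<^esub> (iota (E b) \<otimes>\<^bsub>Ok\<^esub> b))"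
      unfolding c(2)
    proof (rule O.add.finprod_cong')
      show "(\<lambda>b. iota (emb p (k b)) \<otimes>\<^bsub>Ok\<^esub> b \<oplus>\<^bsub>Ok\<^esub> d1 \<otimes>\<^bsub>Ok\<^esub> (iota (E b) \<otimes>\<^bsub>Ok\<^esub> b)) \<in> B \<rightarrow> carrier Ok"
        using embc Bc Ec d1c by auto
      fix b assume b: "b \<in> B"
      show "iota (c b) \<otimes>\<^bsub>Ok\<^esub> b = iota (emb p (k b)) \<otimes>\<^bsub>Ok\<^esub> b \<oplus>\<^bsub>Ok\<^esub> d1 \<otimes>\<^bsub>Ok\<^esub> (iota (E b) \<otimes>\<^bsub>Ok\<^esub> b)"
        unfolding ic[OF b] using embc Bc[OF b] Ec[OF b] d1c by (simp add: O.l_distr O.m_assoc)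
    qed simp
    also have "\<dots> = r k \<oplus>\<^bsub>Ok\<^esub> (\<Oplus>\<^bsub>Ok\<^esub> b\<in>B. d1 \<otimes>\<^bsub>Ok\<^esub> (iota (E b) \<otimes>\<^bsub>Ok\<^esub> b))"
      unfolding r_def by (rule O.finsum_addf) (use embc Bc Ec d1c in auto)
    also have "(\<Oplus>\<^bsub>Ok\<^esub> b\<in>B. d1 \<otimes>\<^bsub>Ok\<^esub> (iota (E b) \<otimes>\<^bsub>Ok\<^esub> b)) = d1 \<otimes>\<^bsub>Ok\<^esub> y"
      unfolding y_def by (rule O.finsum_rdistr[symmetric]) (use B(1) Bc Ec d1c in auto)
    finally have "a = d1 \<otimes>\<^bsub>Ok\<^esub> y \<oplus>\<^bsub>Ok\<^esub> r k" using rc yc d1c by (simp add: O.a_comm)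
    then have "PIdl\<^bsub>Ok\<^esub> d1 +>\<^bsub>Ok\<^esub> a = PIdl\<^bsub>Ok\<^esub> d1 +>\<^bsub>Ok\<^esub> r k"
      using O.PIdl_coset_eq_iff[OF d1c a(1) rc] yc by blast
    then show "Q \<in> (\<lambda>k. PIdl\<^bsub>Ok\<^esub> d1 +>\<^bsub>Ok\<^esub> r k) ` S" using a(2) kS by blast
  qed
  then show ?thesis unfolding d1_def[symmetric] using Sfin finite_subset by blast
qed

lemma d1_exists:
  fixes N :: nat
  assumes N: "N > 0"
  shows "\<exists>d1 t. d1 \<in> carrier Ok \<and> d1 \<noteq> \<zero>\<^bsub>Ok\<^esub> \<and> finite (O.Oquot d1) \<and> t \<in> carrier Ok \<and>
     d1 = [N] \<cdot>\<^bsub>Ok\<^esub> \<one>\<^bsub>Ok\<^esub> \<otimes>\<^bsub>Ok\<^esub> t"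
proof -
  obtain v u where vu: "int N = p ^ v * u" "\<not> p dvd u" "u > 0" using pv_decomp[OF p1, of "int N"] N by auto
  obtain e where e: "e \<in> carrier (Zp p)" "mult (Zp p) (emb p u) e = one (Zp p)"
    using Zp_unit[OF p vu(2)] by blast
  define d1 where "d1 = iota (emb p (p ^ v))"
  define t where "t = iota e"
  have embc: "\<And>m. iota (emb p m) \<in> carrier Ok" by (rule iota_closed[OF emb_carrier[OF p1]])
  have tc: "t \<in> carrier Ok" unfolding t_def by (rule iota_closed[OF e(1)])
  have "[N] \<cdot>\<^bsub>Ok\<^esub> \<one>\<^bsub>Ok\<^esub> = iota (emb p (int N))" using iota_emb_nat by simp
  also have "\<dots> = d1 \<otimes>\<^bsub>Ok\<^esub> iota (emb p u)" unfolding vu(1) d1_def by (rule iota_emb_mult)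
  finally have Ne: "[N] \<cdot>\<^bsub>Ok\<^esub> \<one>\<^bsub>Ok\<^esub> = d1 \<otimes>\<^bsub>Ok\<^esub> iota (emb p u)" .
  have ut: "iota (emb p u) \<otimes>\<^bsub>Ok\<^esub> t = \<one>\<^bsub>Ok\<^esub>"
    unfolding t_def using ring_hom_mult[OF hom emb_carrier[OF p1] e(1), of u] e(2) ring_hom_one[OF hom] by simp
  have "[N] \<cdot>\<^bsub>Ok\<^esub> \<one>\<^bsub>Ok\<^esub> \<otimes>\<^bsub>Ok\<^esub> t = d1"
    unfolding Ne using ut embc tc by (simp add: O.m_assoc d1_def)
  moreover have "d1 \<noteq> \<zero>\<^bsub>Ok\<^esub>" unfolding d1_def
    by (rule emb_nonzero[of _ "Suc v"]) (use p1 in auto)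
  moreover have "finite (O.Oquot d1)" unfolding d1_def by (rule finite_Oquot_pv)
  moreover have "d1 \<in> carrier Ok" unfolding d1_def by (rule embc)
  ultimately show ?thesis using tc by metis
qed

end

theorem lemma2p5:
  fixes G :: "('g, 'c) monoid_scheme"
    and Ok :: "('a, 'b) ring_scheme"
    and p :: int
    and iota :: "(nat \<Rightarrow> int) \<Rightarrow> 'a"
    and \<Psi> :: "('g \<Rightarrow> 'a) set"
    and x :: "('g \<Rightarrow> 'a) \<Rightarrow> 'a"
  assumes "comm_group G" and "finite (carrier G)"
    and "Factorial_Ring.prime p" and "odd p"
    and "finite_ext_Zp p Ok iota"
    and "contains_char_values G Ok"
    and "\<Psi> \<subseteq> characters G Ok"
    and "x \<in> char_group_ring G Ok \<Psi>"
    and "non_zerodivisor Ok \<Psi> (char_group_ring G Ok \<Psi>) x"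
  shows "card (quot_principal Ok \<Psi> (char_group_ring G Ok \<Psi>) x)
         = card (carrier (Ok Quot (PIdl\<^bsub>Ok\<^esub> (\<Otimes>\<^bsub>Ok\<^esub> \<psi>\<in>\<Psi>. x \<psi>))))"
proof -
  have fe: "principal_domain Ok" "iota \<in> ring_hom (Zp p) Ok" "inj_on iota (carrier (Zp p))"
    "\<exists>B. finite B \<and> B \<subseteq> carrier Ok \<and>
        (\<forall>a \<in> carrier Ok. \<exists>c. c \<in> (B \<rightarrow> carrier (Zp p)) \<and>
            a = (\<Oplus>\<^bsub>Ok\<^esub> b\<in>B. iota (c b) \<otimes>\<^bsub>Ok\<^esub> b))"
    using assms(5) unfolding finite_ext_Zp_def by blast+
  have dom: "domain Ok" using fe(1) principal_domain.axioms(1) by blast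
  interpret CS: charset G Ok \<Psi>
    by (intro charset.intro charsetup.intro charset_axioms.intro charsetup_axioms.intro)
       (use assms(1,2,7) dom in auto)
  interpret ZP: zpext Ok p iota
    by (intro zpext.intro zpext_axioms.intro) (use assms(3) fe dom in auto)
  obtain d1 t where d1: "d1 \<in> carrier Ok" "d1 \<noteq> \<zero>\<^bsub>Ok\<^esub>" "finite (CS.O.Oquot d1)" "t \<in> carrier Ok"
    "d1 = [CS.N] \<cdot>\<^bsub>Ok\<^esub> \<one>\<^bsub>Ok\<^esub> \<otimes>\<^bsub>Ok\<^esub> t"
    using ZP.d1_exists[OF CS.N_pos] by blast
  show ?thesis
    by (rule CS.main_charset[OF assms(8) assms(9) ZP.N_nonzero[OF CS.N_pos] d1])
qed

end
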